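(* Let $\mathrm{f}$ be a chief factor function, $G$ a finite group, $K\trianglelefteq G$, and $H/T$ a non-abelian chief factor of $G$ with $K\le T$. Define $Z_1,Z_2$ by $Z_1/K=\mathrm{Z}(G/K,\mathrm{f})\cap T/K$ and $Z_2/K=\mathrm{Z}(G/K,\mathrm{f})\cap H/K$. If $\mathrm{f}(H/T,G)=0$ then $Z_2=Z_1$. If $\mathrm{f}(H/T,G)=1$, let $C$ be the subgroup with $Z_1\le C$ and $C/Z_1=\big(C_{H/Z_1}(T/Z_1)\big)^{\mathfrak{S}}$. Then $Z_2\ne Z_1$ if and only if $|C/Z_1|=|H/T|$, and in that case $Z_2=C$.
   Context: A chief factor function is a function $\mathrm{f}$ assigning $0$ or $1$ to every pair $(H/K,G)$ with $G$ a finite group and $H/K$ a chief factor of $G$, such that: (1) $\mathrm{f}(H/K,G)=\mathrm{f}(M/N,G)$ whenever $H/K$ and $M/N$ are $G$-isomorphic chief factors of $G$; (2) $\mathrm{f}(H/K,G)=\mathrm{f}((H/N)/(K/N),G/N)$ for every $N\trianglelefteq G$ with $N\le K$. $\mathrm{Z}(G,\mathrm{f})$ denotes the greatest normal subgroup of $G$ such that $\mathrm{f}(H/K,G)=1$ for every chief factor $H/K$ of $G$ with $H\le \mathrm{Z}(G,\mathrm{f})$. For a group $X$, $X^{\mathfrak{S}}$ is the soluble residual, i.e. the smallest normal subgroup of $X$ with soluble quotient. *)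

theory Defs
  imports "HOL-Algebra.Algebra"
begin

definition chief_factor :: "'a monoid \<Rightarrow> 'a set \<Rightarrow> 'a set \<Rightarrow> bool" where
  "chief_factor G H K \<longleftrightarrow> H \<lhd> G \<and> K \<lhd> G \<and> K \<subset> H \<and>
     (\<forall>N. N \<lhd> G \<and> K \<subseteq> N \<and> N \<subseteq> H \<longrightarrow> N = K \<or> N = H)"

definition sect :: "'a monoid \<Rightarrow> 'a set \<Rightarrow> 'a set \<Rightarrow> 'a set monoid" where
  "sect G H K = FactGroup (G\<lparr>carrier := H\<rparr>) K"

definition cconj :: "'a monoid \<Rightarrow> 'a \<Rightarrow> 'a set \<Rightarrow> 'a set" where
  "cconj G g Y = (\<lambda>y. monoid.mult G (monoid.mult G (m_inv G g) y) g) ` Y"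

definition G_isomorphic :: "'a monoid \<Rightarrow> 'a set \<Rightarrow> 'a set \<Rightarrow> 'a set \<Rightarrow> 'a set \<Rightarrow> bool" where
  "G_isomorphic G H K M N \<longleftrightarrow> (\<exists>\<phi>. \<phi> \<in> iso (sect G H K) (sect G M N) \<and>
     (\<forall>g \<in> carrier G. \<forall>x \<in> carrier (sect G H K). \<phi> (cconj G g x) = cconj G g (\<phi> x)))"

definition cff_iso_invariant :: "('a monoid \<Rightarrow> 'a set \<Rightarrow> 'a set \<Rightarrow> bool) \<Rightarrow> bool" where
  "cff_iso_invariant f \<longleftrightarrow> (\<forall>G H K M N. group G \<and> finite (carrier G) \<and>
     chief_factor G H K \<and> chief_factor G M N \<and> G_isomorphic G H K M N \<longrightarrow> f G H K = f G M N)"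

definition quot_img :: "'a monoid \<Rightarrow> 'a set \<Rightarrow> 'a set \<Rightarrow> 'a set set" where
  "quot_img G H N = (\<lambda>h. r_coset G N h) ` H"

definition cff_quot_compat :: "('a monoid \<Rightarrow> 'a set \<Rightarrow> 'a set \<Rightarrow> bool)
     \<Rightarrow> ('a set monoid \<Rightarrow> 'a set set \<Rightarrow> 'a set set \<Rightarrow> bool) \<Rightarrow> bool" where
  "cff_quot_compat f0 f1 \<longleftrightarrow> (\<forall>G H K N. group G \<and> finite (carrier G) \<and>
     chief_factor G H K \<and> N \<lhd> G \<and> N \<subseteq> K \<longrightarrow>
       f1 (FactGroup G N) (quot_img G H N) (quot_img G K N) = f0 G H K)"

text \<open>A chief factor function, restricted to the groups on type 'a and on type 'a set
  (True stands for the value 1, False for 0).\<close>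
definition chief_factor_function :: "('a monoid \<Rightarrow> 'a set \<Rightarrow> 'a set \<Rightarrow> bool)
     \<Rightarrow> ('a set monoid \<Rightarrow> 'a set set \<Rightarrow> 'a set set \<Rightarrow> bool) \<Rightarrow> bool" where
  "chief_factor_function f0 f1 \<longleftrightarrow> cff_iso_invariant f0 \<and> cff_iso_invariant f1 \<and>
     cff_quot_compat f0 f1"

definition ZF :: "'b monoid \<Rightarrow> ('b monoid \<Rightarrow> 'b set \<Rightarrow> 'b set \<Rightarrow> bool) \<Rightarrow> 'b set" where
  "ZF G f = (GREATEST Z. Z \<lhd> G \<and>
     (\<forall>A B. chief_factor G A B \<and> A \<subseteq> Z \<longrightarrow> f G A B))"

definition centralizer :: "'b monoid \<Rightarrow> 'b set \<Rightarrow> 'b set" where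
  "centralizer Y S = {x \<in> carrier Y. \<forall>s \<in> S. monoid.mult Y x s = monoid.mult Y s x}"

definition sol_res :: "'b monoid \<Rightarrow> 'b set" where
  "sol_res Y = (LEAST N. N \<lhd> Y \<and> solvable (FactGroup Y N))"

end

theory Submission
  imports Defs
begin


lemma sm_memI: "x \<in> U \<Longrightarrow> y \<in> V \<Longrightarrow> x \<otimes>\<^bsub>G\<^esub> y \<in> U <#>\<^bsub>G\<^esub> V"
  unfolding set_mult_def by auto

lemma sm_memE: "w \<in> U <#>\<^bsub>G\<^esub> V \<Longrightarrow> (\<And>x y. x \<in> U \<Longrightarrow> y \<in> V \<Longrightarrow> w = x \<otimes>\<^bsub>G\<^esub> y \<Longrightarrow> P) \<Longrightarrow> P"
  unfolding set_mult_def by auto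

context group begin

lemma cancel_l: "x \<in> carrier G \<Longrightarrow> y \<in> carrier G \<Longrightarrow> inv x \<otimes> (x \<otimes> y) = y"
  by (metis l_inv l_one m_assoc inv_closed)

lemma cancel_r: "x \<in> carrier G \<Longrightarrow> y \<in> carrier G \<Longrightarrow> x \<otimes> y \<otimes> inv y = x"
  by (metis r_inv r_one m_assoc inv_closed)

lemma sm_subset_sub:
  assumes "subgroup S G" "U \<subseteq> S" "V \<subseteq> S" shows "U <#> V \<subseteq> S"
proof
  fix w assume "w \<in> U <#> V"
  then obtain x y where "x \<in> U" "y \<in> V" "w = x \<otimes> y" by (rule sm_memE)
  thus "w \<in> S" using assms subgroup.m_closed[OF assms(1)] by auto
qed

lemma sm_absorb_l:
  assumes "subgroup S G" "U \<subseteq> S" "\<one> \<in> U" shows "U <#> S = S"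
proof
  show "U <#> S \<subseteq> S" using sm_subset_sub[OF assms(1,2)] by simp
  show "S \<subseteq> U <#> S"
  proof
    fix s assume s: "s \<in> S"
    hence "s = \<one> \<otimes> s" using subgroup.mem_carrier[OF assms(1)] by simp
    thus "s \<in> U <#> S" using sm_memI[where G=G, OF assms(3) s] by simp
  qed
qed

lemma sm_absorb_r:
  assumes "subgroup S G" "U \<subseteq> S" "\<one> \<in> U" shows "S <#> U = S"
proof
  show "S <#> U \<subseteq> S" using sm_subset_sub[OF assms(1) _ assms(2)] by simp
  show "S \<subseteq> S <#> U"
  proof
    fix s assume s: "s \<in> S"
    hence "s = s \<otimes> \<one>" using subgroup.mem_carrier[OF assms(1)] by simp
    thus "s \<in> S <#> U" using sm_memI[where G=G, OF s assms(3)] by simp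
  qed
qed

lemma dedekind_l:
  assumes "subgroup U G" "subgroup V G" "subgroup W G" "U \<subseteq> W"
  shows "(U <#> V) \<inter> W = U <#> (V \<inter> W)"
proof
  show "(U <#> V) \<inter> W \<subseteq> U <#> (V \<inter> W)"
  proof
    fix w assume w: "w \<in> (U <#> V) \<inter> W"
    then obtain x y where xy: "x \<in> U" "y \<in> V" "w = x \<otimes> y" by (auto elim: sm_memE)
    have xc: "x \<in> carrier G" "y \<in> carrier G"
      using subgroup.mem_carrier[OF assms(1) xy(1)] subgroup.mem_carrier[OF assms(2) xy(2)] by auto
    have "y = inv x \<otimes> w" unfolding xy(3) by (rule cancel_l[OF xc, symmetric])
    moreover have "inv x \<otimes> w \<in> W"
      using subgroup.m_inv_closed[OF assms(3)] assms(4) xy(1) w subgroup.m_closed[OF assms(3)] by blast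
    ultimately have "y \<in> W" by simp
    thus "w \<in> U <#> (V \<inter> W)" using xy sm_memI[where G=G, of x U y "V \<inter> W"] by simp
  qed
  show "U <#> (V \<inter> W) \<subseteq> (U <#> V) \<inter> W"
  proof
    fix w assume "w \<in> U <#> (V \<inter> W)"
    then obtain x y where xy: "x \<in> U" "y \<in> V \<inter> W" "w = x \<otimes> y" by (rule sm_memE)
    have "w \<in> W" using xy assms(4) subgroup.m_closed[OF assms(3)] by blast
    moreover have "w \<in> U <#> V" using xy sm_memI[where G=G, of x U y V] by simp
    ultimately show "w \<in> (U <#> V) \<inter> W" by blast
  qed
qed

lemma dedekind_r:
  assumes "subgroup U G" "subgroup V G" "subgroup W G" "V \<subseteq> W"
  shows "(U <#> V) \<inter> W = (U \<inter> W) <#> V"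
proof
  show "(U <#> V) \<inter> W \<subseteq> (U \<inter> W) <#> V"
  proof
    fix w assume w: "w \<in> (U <#> V) \<inter> W"
    then obtain x y where xy: "x \<in> U" "y \<in> V" "w = x \<otimes> y" by (auto elim: sm_memE)
    have xc: "x \<in> carrier G" "y \<in> carrier G"
      using subgroup.mem_carrier[OF assms(1) xy(1)] subgroup.mem_carrier[OF assms(2) xy(2)] by auto
    have "x = w \<otimes> inv y" unfolding xy(3) by (rule cancel_r[OF xc, symmetric])
    moreover have "w \<otimes> inv y \<in> W"
      using subgroup.m_inv_closed[OF assms(3)] assms(4) xy(2) w subgroup.m_closed[OF assms(3)] by blast
    ultimately have "x \<in> W" by simp
    thus "w \<in> (U \<inter> W) <#> V" using xy sm_memI[where G=G, of x "U \<inter> W" y V] by simp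
  qed
  show "(U \<inter> W) <#> V \<subseteq> (U <#> V) \<inter> W"
  proof
    fix w assume "w \<in> (U \<inter> W) <#> V"
    then obtain x y where xy: "x \<in> U \<inter> W" "y \<in> V" "w = x \<otimes> y" by (rule sm_memE)
    have "w \<in> W" using xy assms(4) subgroup.m_closed[OF assms(3)] by blast
    moreover have "w \<in> U <#> V" using xy sm_memI[where G=G, of x U y V] by simp
    ultimately show "w \<in> (U <#> V) \<inter> W" by blast
  qed
qed


lemma cancel_l': "x \<in> carrier G \<Longrightarrow> y \<in> carrier G \<Longrightarrow> x \<otimes> (inv x \<otimes> y) = y"
  by (metis r_inv l_one m_assoc inv_closed)

lemma rcos_memI: "b \<in> B \<Longrightarrow> b \<otimes> x \<in> B #> x"
  unfolding r_coset_def by auto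

lemma rcos_memE: "y \<in> B #> x \<Longrightarrow> (\<And>b. b \<in> B \<Longrightarrow> y = b \<otimes> x \<Longrightarrow> P) \<Longrightarrow> P"
  unfolding r_coset_def by auto

lemma nsub: "N \<lhd> G \<Longrightarrow> subgroup N G"
  by (rule normal_imp_subgroup)

lemma nsubset: "N \<lhd> G \<Longrightarrow> N \<subseteq> carrier G"
  using normal_imp_subgroup subgroup.subset by blast

end

definition PF :: "'b monoid \<Rightarrow> ('b monoid \<Rightarrow> 'b set \<Rightarrow> 'b set \<Rightarrow> bool) \<Rightarrow> 'b set \<Rightarrow> bool" where
  "PF G f N \<longleftrightarrow> N \<lhd> G \<and> (\<forall>A B. chief_factor G A B \<and> A \<subseteq> N \<longrightarrow> f G A B)"

definition isoinv :: "'b monoid \<Rightarrow> ('b monoid \<Rightarrow> 'b set \<Rightarrow> 'b set \<Rightarrow> bool) \<Rightarrow> bool" where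
  "isoinv G f \<longleftrightarrow> (\<forall>H K M N. chief_factor G H K \<and> chief_factor G M N \<and> G_isomorphic G H K M N
      \<longrightarrow> f G H K = f G M N)"

locale mgroup = group G for G :: "'a monoid" (structure)

context mgroup begin

lemma coset_conj:
  assumes B: "B \<lhd> G" and g: "g \<in> carrier G" and x: "x \<in> carrier G"
  shows "cconj G g (B #> x) = B #> (inv g \<otimes> x \<otimes> g)"
proof
  interpret B: normal B G by (rule B)
  have Bc: "\<And>b. b \<in> B \<Longrightarrow> b \<in> carrier G" using B.subset by blast
  show "cconj G g (B #> x) \<subseteq> B #> (inv g \<otimes> x \<otimes> g)"
  proof
    fix z assume "z \<in> cconj G g (B #> x)"
    then obtain y where y: "y \<in> B #> x" "z = inv g \<otimes> y \<otimes> g" unfolding cconj_def by auto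
    obtain b where b: "b \<in> B" "y = b \<otimes> x" using y(1) by (rule rcos_memE)
    have "z = (inv g \<otimes> b \<otimes> g) \<otimes> (inv g \<otimes> x \<otimes> g)"
      using g x Bc[OF b(1)] by (simp add: y(2) b(2) m_assoc cancel_l')
    thus "z \<in> B #> (inv g \<otimes> x \<otimes> g)" using rcos_memI B.inv_op_closed1[OF g b(1)] by simp
  qed
  show "B #> (inv g \<otimes> x \<otimes> g) \<subseteq> cconj G g (B #> x)"
  proof
    fix z assume "z \<in> B #> (inv g \<otimes> x \<otimes> g)"
    then obtain b where b: "b \<in> B" "z = b \<otimes> (inv g \<otimes> x \<otimes> g)" by (rule rcos_memE)
    have "z = inv g \<otimes> ((g \<otimes> b \<otimes> inv g) \<otimes> x) \<otimes> g"
      using g x Bc[OF b(1)] by (simp add: b(2) m_assoc cancel_l)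
    moreover have "(g \<otimes> b \<otimes> inv g) \<otimes> x \<in> B #> x" using rcos_memI B.inv_op_closed2[OF g b(1)] by simp
    ultimately show "z \<in> cconj G g (B #> x)" unfolding cconj_def by blast
  qed
qed

lemma sect_carrier: "carrier (sect G A B) = (\<lambda>a. B #> a) ` A"
  unfolding sect_def FactGroup_def RCOSETS_def by auto

lemma sect_mult: "monoid.mult (sect G A B) = set_mult G"
  unfolding sect_def FactGroup_def by (auto simp: fun_eq_iff)

lemma sect_eq: "sect G A B = (G Mod B)\<lparr>carrier := (\<lambda>a. B #> a) ` A\<rparr>"
proof -
  have 1: "set_mult (G\<lparr>carrier := A\<rparr>) = set_mult G"
    by (intro ext) (rule set_mult_consistent)
  have 2: "rcosets\<^bsub>G\<lparr>carrier := A\<rparr>\<^esub> B = (\<lambda>a. B #> a) ` A"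
    unfolding RCOSETS_def by auto
  show ?thesis unfolding sect_def FactGroup_def 1 2 by simp
qed

lemma rcos_eq_imp:
  assumes "subgroup B G" "x \<in> carrier G" "y \<in> carrier G" "B #> x = B #> y"
  shows "x \<otimes> inv y \<in> B"
proof -
  have "B #> (x \<otimes> inv y) = B" by (rule coset_mult_inv2[OF assms(4) assms(2,3) subgroup.subset[OF assms(1)]])
  thus ?thesis by (rule coset_join1[OF _ _ assms(1)]) (simp add: assms)
qed

lemma rcos_eqI:
  assumes "subgroup B G" "x \<in> carrier G" "y \<in> carrier G" "x \<otimes> inv y \<in> B"
  shows "B #> x = B #> y"
proof -
  have "B #> (x \<otimes> inv y) = B" by (rule coset_join2[OF _ assms(1) assms(4)]) (simp add: assms)
  thus ?thesis by (rule coset_mult_inv1[OF _ assms(2,3) subgroup.subset[OF assms(1)]])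
qed

lemma perspective_iso:
  assumes A: "A \<lhd> G" and B: "B \<lhd> G" and B': "B' \<lhd> G"
    and BA: "B \<subseteq> A" and BB': "B \<subseteq> B'"
    and A': "A' = A <#> B'" and AB': "A \<inter> B' = B"
  shows "G_isomorphic G A B A' B'"
proof -
  interpret nB: normal B G by (rule B)
  interpret nB': normal B' G by (rule B')
  have Ac: "A \<subseteq> carrier G" using nsubset[OF A] .
  have Bc: "B \<subseteq> carrier G" using nsubset[OF B] .
  have B'c: "B' \<subseteq> carrier G" using nsubset[OF B'] .
  define \<phi> where "\<phi> = (\<lambda>U. B' <#> U)"
  have phi: "\<phi> (B #> x) = B' #> x" if x: "x \<in> carrier G" for x
  proof -
    have "\<phi> (B #> x) = (B' <#> B) #> x" unfolding \<phi>_def using setmult_rcos_assoc[OF B'c Bc x] .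
    also have "B' <#> B = B'" using sm_absorb_r[OF nsub[OF B'] BB' subgroup.one_closed[OF nsub[OF B]]] .
    finally show ?thesis .
  qed
  have A'c: "A' = B' <#> A" unfolding A' using commut_normal[OF nsub[OF A] B'] .
  have hom: "\<phi> \<in> hom (sect G A B) (sect G A' B')"
  proof (rule homI)
    fix U assume "U \<in> carrier (sect G A B)"
    then obtain a where a: "a \<in> A" "U = B #> a" unfolding sect_carrier by auto
    have "a \<in> A'" unfolding A'c using sm_memI[where G=G, OF nB'.one_closed a(1)] Ac a(1) by auto
    thus "\<phi> U \<in> carrier (sect G A' B')" unfolding sect_carrier a(2) using phi Ac a(1) by auto
  next
    fix U V assume "U \<in> carrier (sect G A B)" "V \<in> carrier (sect G A B)"
    then obtain a b where ab: "a \<in> A" "U = B #> a" "b \<in> A" "V = B #> b" unfolding sect_carrier by auto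
    have c: "a \<in> carrier G" "b \<in> carrier G" using ab Ac by auto
    show "\<phi> (U \<otimes>\<^bsub>sect G A B\<^esub> V) = \<phi> U \<otimes>\<^bsub>sect G A' B'\<^esub> \<phi> V"
      unfolding sect_mult ab(2,4) using c nB.rcos_sum nB'.rcos_sum phi by simp
  qed
  have inj: "inj_on \<phi> (carrier (sect G A B))"
  proof (rule inj_onI)
    fix U V assume "U \<in> carrier (sect G A B)" "V \<in> carrier (sect G A B)" and e: "\<phi> U = \<phi> V"
    then obtain a b where ab: "a \<in> A" "U = B #> a" "b \<in> A" "V = B #> b" unfolding sect_carrier by auto
    have c: "a \<in> carrier G" "b \<in> carrier G" using ab Ac by auto
    have "B' #> a = B' #> b" using e phi c ab by simp
    hence "a \<otimes> inv b \<in> B'" using rcos_eq_imp[OF nsub[OF B'] c] by simp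
    moreover have "a \<otimes> inv b \<in> A" using ab subgroup.m_closed[OF nsub[OF A]] subgroup.m_inv_closed[OF nsub[OF A]] by blast
    ultimately have "a \<otimes> inv b \<in> B" using AB' by blast
    thus "U = V" using rcos_eqI[OF nsub[OF B] c] ab by simp
  qed
  have surj: "\<phi> ` carrier (sect G A B) = carrier (sect G A' B')"
  proof
    show "\<phi> ` carrier (sect G A B) \<subseteq> carrier (sect G A' B')" using hom hom_carrier by blast
    show "carrier (sect G A' B') \<subseteq> \<phi> ` carrier (sect G A B)"
    proof
      fix W assume "W \<in> carrier (sect G A' B')"
      then obtain a' where a': "a' \<in> A'" "W = B' #> a'" unfolding sect_carrier by auto
      then obtain b a where ba: "b \<in> B'" "a \<in> A" "a' = b \<otimes> a" unfolding A'c by (auto elim: sm_memE)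
      have c: "a \<in> carrier G" using ba Ac by auto
      have "a' \<in> B' #> a" using ba rcos_memI by simp
      hence "B' #> a = B' #> a'" using repr_independence[OF _ c nsub[OF B']] by simp
      hence "W = \<phi> (B #> a)" using phi[OF c] a' by simp
      moreover have "B #> a \<in> carrier (sect G A B)" unfolding sect_carrier using ba by auto
      ultimately show "W \<in> \<phi> ` carrier (sect G A B)" by blast
    qed
  qed
  have iso: "\<phi> \<in> iso (sect G A B) (sect G A' B')"
    unfolding iso_def bij_betw_def using hom inj surj by blast
  have conj: "\<forall>g \<in> carrier G. \<forall>U \<in> carrier (sect G A B). \<phi> (cconj G g U) = cconj G g (\<phi> U)"
  proof (intro ballI)
    fix g U assume g: "g \<in> carrier G" and "U \<in> carrier (sect G A B)"
    then obtain a where a: "a \<in> A" "U = B #> a" unfolding sect_carrier by auto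
    have c: "a \<in> carrier G" using a Ac by auto
    show "\<phi> (cconj G g U) = cconj G g (\<phi> U)"
      unfolding a(2) using coset_conj[OF B g c] coset_conj[OF B' g c] phi c g by simp
  qed
  show ?thesis unfolding G_isomorphic_def using iso conj by blast
qed


lemma one_sub: "subgroup S G \<Longrightarrow> \<one> \<in> S"
  by (rule subgroup.one_closed)

lemma sm_sup_r: "subgroup U G \<Longrightarrow> V \<subseteq> carrier G \<Longrightarrow> V \<subseteq> U <#> V"
proof
  fix v assume "subgroup U G" "V \<subseteq> carrier G" "v \<in> V"
  hence "\<one> \<otimes> v \<in> U <#> V" using sm_memI[where G=G] one_sub by blast
  thus "v \<in> U <#> V" using \<open>v \<in> V\<close> \<open>V \<subseteq> carrier G\<close> by auto
qed

lemma sm_sup_l: "subgroup V G \<Longrightarrow> U \<subseteq> carrier G \<Longrightarrow> U \<subseteq> U <#> V"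
proof
  fix u assume "subgroup V G" "U \<subseteq> carrier G" "u \<in> U"
  hence "u \<otimes> \<one> \<in> U <#> V" using sm_memI[where G=G] one_sub by blast
  thus "u \<in> U <#> V" using \<open>u \<in> U\<close> \<open>U \<subseteq> carrier G\<close> by auto
qed

lemma perspective_chief:
  assumes A: "A \<lhd> G" and B: "B \<lhd> G" and B': "B' \<lhd> G"
    and BA: "B \<subseteq> A" and BB': "B \<subseteq> B'"
    and A': "A' = A <#> B'" and AB': "A \<inter> B' = B"
  shows "chief_factor G A B \<longleftrightarrow> chief_factor G A' B'"
proof -
  have sA: "subgroup A G" and sB: "subgroup B G" and sB': "subgroup B' G"
    using A B B' nsub by auto
  have nA': "A' \<lhd> G" unfolding A' by (rule normal_subgroup_set_mult_closed[OF A B'])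
  have AA': "A \<subseteq> A'" unfolding A' by (rule sm_sup_l[OF sB' nsubset[OF A]])
  have B'A': "B' \<subseteq> A'" unfolding A' by (rule sm_sup_r[OF sA nsubset[OF B']])
  have BB'eq: "B <#> B' = B'" by (rule sm_absorb_l[OF sB' BB' one_sub[OF sB]])
  show ?thesis
  proof
    assume ch: "chief_factor G A B"
    have ne: "B' \<noteq> A'"
    proof
      assume "B' = A'"
      hence "A \<subseteq> B'" using AA' by simp
      hence "A = B" using AB' by blast
      thus False using ch unfolding chief_factor_def by blast
    qed
    have mx: "N = B' \<or> N = A'" if N: "N \<lhd> G" "B' \<subseteq> N" "N \<subseteq> A'" for N
    proof -
      have "A \<inter> N \<lhd> G" by (rule normal_subgroup_intersect[OF A N(1)])
      moreover have "B \<subseteq> A \<inter> N" "A \<inter> N \<subseteq> A" using BA BB' N by auto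
      ultimately have c: "A \<inter> N = B \<or> A \<inter> N = A" using ch unfolding chief_factor_def by blast
      have "N = A' \<inter> N" using N by blast
      also have "\<dots> = (A \<inter> N) <#> B'" unfolding A' by (rule dedekind_r[OF sA sB' nsub[OF N(1)] N(2)])
      finally have e: "N = (A \<inter> N) <#> B'" .
      show ?thesis using c e BB'eq A' by auto
    qed
    show "chief_factor G A' B'" unfolding chief_factor_def using nA' B' ne B'A' mx by blast
  next
    assume ch: "chief_factor G A' B'"
    have ne: "B \<noteq> A"
    proof
      assume "B = A"
      hence "A' = B'" using A' BB'eq by simp
      thus False using ch unfolding chief_factor_def by blast
    qed
    have mx: "M = B \<or> M = A" if M: "M \<lhd> G" "B \<subseteq> M" "M \<subseteq> A" for M
    proof -
      have sM: "subgroup M G" using M nsub by auto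
      have nN: "M <#> B' \<lhd> G" by (rule normal_subgroup_set_mult_closed[OF M(1) B'])
      moreover have "B' \<subseteq> M <#> B'" by (rule sm_sup_r[OF sM nsubset[OF B']])
      moreover have "M <#> B' \<subseteq> A'" unfolding A' using M(3) mono_set_mult by blast
      ultimately have c: "M <#> B' = B' \<or> M <#> B' = A'" using ch unfolding chief_factor_def by blast
      have "(M <#> B') \<inter> A = M <#> (B' \<inter> A)" by (rule dedekind_l[OF sM sB' sA M(3)])
      also have "B' \<inter> A = B" using AB' by blast
      also have "M <#> B = M" by (rule sm_absorb_r[OF sM M(2) one_sub[OF sB]])
      finally have e: "(M <#> B') \<inter> A = M" .
      show ?thesis
      proof (cases "M <#> B' = B'")
        case True thus ?thesis using e AB' by auto
      next
        case False hence "M <#> B' = A'" using c by blast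
        thus ?thesis using e AA' by auto
      qed
    qed
    show "chief_factor G A B" unfolding chief_factor_def using A B ne BA mx by blast
  qed
qed


lemma perspective:
  assumes A: "A \<lhd> G" and B: "B \<lhd> G" and B': "B' \<lhd> G"
    and BA: "B \<subseteq> A" and BB': "B \<subseteq> B'"
    and A': "A' = A <#> B'" and AB': "A \<inter> B' = B"
  shows "(chief_factor G A B \<longleftrightarrow> chief_factor G A' B') \<and> G_isomorphic G A B A' B'"
  using perspective_chief[OF assms] perspective_iso[OF assms] by blast

lemma chief_sub: "chief_factor G A B \<Longrightarrow> A \<lhd> G \<and> B \<lhd> G \<and> B \<subseteq> A \<and> B \<noteq> A"
  unfolding chief_factor_def by blast

lemma chief_max: "chief_factor G A B \<Longrightarrow> N \<lhd> G \<Longrightarrow> B \<subseteq> N \<Longrightarrow> N \<subseteq> A \<Longrightarrow> N = B \<or> N = A"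
  unfolding chief_factor_def by blast

lemma chief_split:
  assumes ch: "chief_factor G A B" and N: "N \<lhd> G"
  shows "(A \<inter> N) <#> B = A \<or> A \<inter> N \<subseteq> B"
proof -
  have A: "A \<lhd> G" and B: "B \<lhd> G" and BA: "B \<subseteq> A" using chief_sub[OF ch] by auto
  have nAN: "A \<inter> N \<lhd> G" by (rule normal_subgroup_intersect[OF A N])
  have nX: "(A \<inter> N) <#> B \<lhd> G" by (rule normal_subgroup_set_mult_closed[OF nAN B])
  have "B \<subseteq> (A \<inter> N) <#> B" by (rule sm_sup_r[OF nsub[OF nAN] nsubset[OF B]])
  moreover have "(A \<inter> N) <#> B \<subseteq> A" by (rule sm_subset_sub[OF nsub[OF A]]) (use BA in auto)
  ultimately have c: "(A \<inter> N) <#> B = B \<or> (A \<inter> N) <#> B = A" using chief_max[OF ch nX] by blast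
  have "A \<inter> N \<subseteq> (A \<inter> N) <#> B" by (rule sm_sup_l[OF nsub[OF B] nsubset[OF nAN]])
  thus ?thesis using c by auto
qed

lemma chief_restrict:
  assumes ch: "chief_factor G A B" and N: "N \<lhd> G" and e: "(A \<inter> N) <#> B = A"
  shows "chief_factor G (A \<inter> N) (B \<inter> N) \<and> G_isomorphic G (A \<inter> N) (B \<inter> N) A B"
proof -
  have A: "A \<lhd> G" and B: "B \<lhd> G" and BA: "B \<subseteq> A" using chief_sub[OF ch] by auto
  have nAN: "A \<inter> N \<lhd> G" by (rule normal_subgroup_intersect[OF A N])
  have nBN: "B \<inter> N \<lhd> G" by (rule normal_subgroup_intersect[OF B N])
  have "(chief_factor G (A \<inter> N) (B \<inter> N) \<longleftrightarrow> chief_factor G A B) \<and> G_isomorphic G (A \<inter> N) (B \<inter> N) A B"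
    by (rule perspective[OF nAN nBN B]) (use BA e in auto)
  thus ?thesis using ch by blast
qed

lemma chief_lift:
  assumes ch: "chief_factor G A B" and N: "N \<lhd> G" and i: "A \<inter> N \<subseteq> B"
  shows "chief_factor G (A <#> N) (B <#> N) \<and> G_isomorphic G A B (A <#> N) (B <#> N)"
proof -
  have A: "A \<lhd> G" and B: "B \<lhd> G" and BA: "B \<subseteq> A" using chief_sub[OF ch] by auto
  have nBN: "B <#> N \<lhd> G" by (rule normal_subgroup_set_mult_closed[OF B N])
  have "A <#> (B <#> N) = (A <#> B) <#> N"
    using set_mult_assoc[OF nsubset[OF A] nsubset[OF B] nsubset[OF N]] by simp
  also have "A <#> B = A" by (rule sm_absorb_r[OF nsub[OF A] BA one_sub[OF nsub[OF B]]])
  finally have e1: "A <#> N = A <#> (B <#> N)" by simp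
  have "(B <#> N) \<inter> A = B <#> (N \<inter> A)" by (rule dedekind_l[OF nsub[OF B] nsub[OF N] nsub[OF A] BA])
  also have "\<dots> = B"
    by (rule sm_absorb_r[OF nsub[OF B]]) (use i one_sub[OF nsub[OF N]] one_sub[OF nsub[OF A]] in auto)
  finally have e2: "A \<inter> (B <#> N) = B" by blast
  have "B \<subseteq> B <#> N" by (rule sm_sup_l[OF nsub[OF N] nsubset[OF B]])
  hence "(chief_factor G A B \<longleftrightarrow> chief_factor G (A <#> N) (B <#> N)) \<and> G_isomorphic G A B (A <#> N) (B <#> N)"
    using perspective[OF A B nBN BA _ e1 e2] by blast
  thus ?thesis using ch by blast
qed

lemma case1:
  assumes f: "isoinv G f" and ch: "chief_factor G A B" and N: "PF G f N" and e: "(A \<inter> N) <#> B = A"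
  shows "f G A B"
proof -
  have nN: "N \<lhd> G" using N unfolding PF_def by blast
  have r: "chief_factor G (A \<inter> N) (B \<inter> N)" "G_isomorphic G (A \<inter> N) (B \<inter> N) A B"
    using chief_restrict[OF ch nN e] by auto
  have "f G (A \<inter> N) (B \<inter> N)" using N r(1) unfolding PF_def by blast
  moreover have "f G (A \<inter> N) (B \<inter> N) = f G A B" using f r ch unfolding isoinv_def by blast
  ultimately show ?thesis by simp
qed

lemma PF_join:
  assumes f: "isoinv G f" and N1: "PF G f N1" and N2: "PF G f N2"
  shows "PF G f (N1 <#> N2)"
proof -
  have n1: "N1 \<lhd> G" and n2: "N2 \<lhd> G" using N1 N2 unfolding PF_def by auto
  have n12: "N1 <#> N2 \<lhd> G" by (rule normal_subgroup_set_mult_closed[OF n1 n2])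
  have "f G A B" if ch: "chief_factor G A B" and AN: "A \<subseteq> N1 <#> N2" for A B
  proof (cases "(A \<inter> N1) <#> B = A")
    case True thus ?thesis using case1[OF f ch N1] by blast
  next
    case False
    hence i: "A \<inter> N1 \<subseteq> B" using chief_split[OF ch n1] by blast
    have l: "chief_factor G (A <#> N1) (B <#> N1)" "G_isomorphic G A B (A <#> N1) (B <#> N1)"
      using chief_lift[OF ch n1 i] by auto
    have A: "A \<lhd> G" and B: "B \<lhd> G" using chief_sub[OF ch] by auto
    have sA1: "subgroup (A <#> N1) G" using normal_subgroup_set_mult_closed[OF A n1] nsub by blast
    have N1A1: "N1 \<subseteq> A <#> N1" by (rule sm_sup_r[OF nsub[OF A] nsubset[OF n1]])
    have N1B1: "N1 \<subseteq> B <#> N1" by (rule sm_sup_r[OF nsub[OF B] nsubset[OF n1]])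
    have A1sub: "A <#> N1 \<subseteq> N1 <#> N2"
    proof -
      have "A <#> N1 \<subseteq> (N1 <#> N2) <#> N1" using AN mono_set_mult by blast
      also have "\<dots> = N1 <#> N2"
        by (rule sm_absorb_r[OF nsub[OF n12]]) (use sm_sup_l[OF nsub[OF n2] nsubset[OF n1]] one_sub[OF nsub[OF n1]] in auto)
      finally show ?thesis .
    qed
    have "(N1 <#> N2) \<inter> (A <#> N1) = N1 <#> (N2 \<inter> (A <#> N1))"
      by (rule dedekind_l[OF nsub[OF n1] nsub[OF n2] sA1 N1A1])
    moreover have "(N1 <#> N2) \<inter> (A <#> N1) = A <#> N1" using A1sub by blast
    ultimately have eA1: "A <#> N1 = N1 <#> ((A <#> N1) \<inter> N2)" by (simp add: Int_commute)
    have "((A <#> N1) \<inter> N2) <#> (B <#> N1) = A <#> N1"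
    proof
      show "((A <#> N1) \<inter> N2) <#> (B <#> N1) \<subseteq> A <#> N1"
        by (rule sm_subset_sub[OF sA1]) (use mono_set_mult[of B A N1 N1] chief_sub[OF ch] in auto)
      have "A <#> N1 = ((A <#> N1) \<inter> N2) <#> N1"
        using eA1 commut_normal[OF nsub[OF normal_subgroup_intersect[OF normal_subgroup_set_mult_closed[OF A n1] n2]] n1]
        by simp
      also have "\<dots> \<subseteq> ((A <#> N1) \<inter> N2) <#> (B <#> N1)" using N1B1 mono_set_mult by blast
      finally show "A <#> N1 \<subseteq> ((A <#> N1) \<inter> N2) <#> (B <#> N1)" .
    qed
    hence "f G (A <#> N1) (B <#> N1)" using case1[OF f l(1) N2] by blast
    moreover have "f G A B = f G (A <#> N1) (B <#> N1)" using f l ch unfolding isoinv_def by blast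
    ultimately show ?thesis by simp
  qed
  thus ?thesis unfolding PF_def using n12 by blast
qed

lemma PF_mono:
  assumes "PF G f M" "N \<lhd> G" "N \<subseteq> M" shows "PF G f N"
  using assms unfolding PF_def by blast

lemma PF_one: "PF G f {\<one>}"
proof -
  have "\<not> chief_factor G A B" if "A \<subseteq> {\<one>}" for A B
  proof
    assume ch: "chief_factor G A B"
    hence "\<one> \<in> B" "B \<subseteq> A" "B \<noteq> A" using chief_sub[OF ch] one_sub nsub by auto
    thus False using that by blast
  qed
  thus ?thesis unfolding PF_def using one_is_normal by blast
qed

lemma PF_ext:
  assumes f: "isoinv G f" and N: "PF G f N" and M: "M \<lhd> G" and ch: "chief_factor G M N" and fv: "f G M N"
  shows "PF G f M"
proof -
  have nN: "N \<lhd> G" using N unfolding PF_def by blast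
  have "f G A B" if chAB: "chief_factor G A B" and AM: "A \<subseteq> M" for A B
  proof (cases "(A \<inter> N) <#> B = A")
    case True thus ?thesis using case1[OF f chAB N] by blast
  next
    case False
    hence i: "A \<inter> N \<subseteq> B" using chief_split[OF chAB nN] by blast
    have l: "chief_factor G (A <#> N) (B <#> N)" "G_isomorphic G A B (A <#> N) (B <#> N)"
      using chief_lift[OF chAB nN i] by auto
    have A: "A \<lhd> G" and B: "B \<lhd> G" using chief_sub[OF chAB] by auto
    have NM: "N \<subseteq> M" using chief_sub[OF ch] by blast
    have nA1: "A <#> N \<lhd> G" by (rule normal_subgroup_set_mult_closed[OF A nN])
    have nB1: "B <#> N \<lhd> G" by (rule normal_subgroup_set_mult_closed[OF B nN])
    have A1M: "A <#> N \<subseteq> M" by (rule sm_subset_sub[OF nsub[OF M] AM NM])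
    have B1M: "B <#> N \<subseteq> M" using sm_subset_sub[OF nsub[OF M] _ NM] AM chief_sub[OF chAB] by blast
    have NA1: "N \<subseteq> A <#> N" by (rule sm_sup_r[OF nsub[OF A] nsubset[OF nN]])
    have NB1: "N \<subseteq> B <#> N" by (rule sm_sup_r[OF nsub[OF B] nsubset[OF nN]])
    have ne: "B <#> N \<noteq> A <#> N" using chief_sub[OF l(1)] by blast
    have cB: "B <#> N = N \<or> B <#> N = M" using chief_max[OF ch nB1 NB1 B1M] .
    have cA: "A <#> N = N \<or> A <#> N = M" using chief_max[OF ch nA1 NA1 A1M] .
    have BA1: "B <#> N \<subseteq> A <#> N" using chief_sub[OF l(1)] by blast
    have "B <#> N = N \<and> A <#> N = M" using cA cB ne BA1 NB1 by auto
    hence "f G (A <#> N) (B <#> N)" using fv by simp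
    moreover have "f G A B = f G (A <#> N) (B <#> N)" using f l chAB unfolding isoinv_def by blast
    ultimately show ?thesis by simp
  qed
  thus ?thesis unfolding PF_def using M by blast
qed

lemma ZF_props:
  assumes fin: "finite (carrier G)" and f: "isoinv G f"
  shows "PF G f (ZF G f) \<and> (\<forall>N. PF G f N \<longrightarrow> N \<subseteq> ZF G f)"
proof -
  define Fam where "Fam = {N. PF G f N}"
  have Fsub: "Fam \<subseteq> Pow (carrier G)" unfolding Fam_def PF_def using nsubset by blast
  have finF: "finite Fam" using finite_subset[OF Fsub] fin by blast
  have neF: "{\<one>} \<in> Fam" unfolding Fam_def using PF_one by blast
  define m where "m = Max (card ` Fam)"
  have "m \<in> card ` Fam" unfolding m_def using finF neF by (intro Max_in) auto
  then obtain N where N: "N \<in> Fam" "card N = m" by blast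
  have grt: "M \<subseteq> N" if M: "M \<in> Fam" for M
  proof -
    have PN: "PF G f N" and PM: "PF G f M" using N M unfolding Fam_def by auto
    have nN: "N \<lhd> G" and nM: "M \<lhd> G" using PN PM unfolding PF_def by auto
    have J: "N <#> M \<in> Fam" unfolding Fam_def using PF_join[OF f PN PM] by blast
    have sub: "N \<subseteq> N <#> M" by (rule sm_sup_l[OF nsub[OF nM] nsubset[OF nN]])
    have finJ: "finite (N <#> M)" using J Fsub fin finite_subset by blast
    have "card (N <#> M) \<le> m" unfolding m_def using J finF by auto
    hence "card (N <#> M) \<le> card N" using N by simp
    hence eq: "N = N <#> M" using card_subset_eq[OF finJ sub] card_mono[OF finJ sub] by simp
    have "M \<subseteq> N <#> M" by (rule sm_sup_r[OF nsub[OF nN] nsubset[OF nM]])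
    thus ?thesis using eq by simp
  qed
  have "ZF G f = N"
    unfolding ZF_def
  proof (rule Greatest_equality)
    show "N \<lhd> G \<and> (\<forall>A B. chief_factor G A B \<and> A \<subseteq> N \<longrightarrow> f G A B)" using N unfolding Fam_def PF_def by blast
    show "\<And>y. y \<lhd> G \<and> (\<forall>A B. chief_factor G A B \<and> A \<subseteq> y \<longrightarrow> f G A B) \<Longrightarrow> y \<le> N"
      using grt unfolding Fam_def PF_def by blast
  qed
  thus ?thesis using N grt unfolding Fam_def by auto
qed

end


context mgroup begin

lemma cancel_r'': "x \<in> carrier G \<Longrightarrow> y \<in> carrier G \<Longrightarrow> x \<otimes> inv y \<otimes> y = x"
  by (metis l_inv r_one m_assoc inv_closed)

lemma pi_hom:
  assumes "K \<lhd> G" shows "group_hom G (G Mod K) (\<lambda>a. K #> a)"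
proof (intro group_hom.intro group_hom_axioms.intro)
  show "group G" by (rule is_group)
  show "group (G Mod K)" by (rule normal.factorgroup_is_group[OF assms])
  show "(\<lambda>a. K #> a) \<in> hom G (G Mod K)" by (rule normal.r_coset_hom_Mod[OF assms])
qed

lemma pi_surj: "(\<lambda>a. K #> a) ` carrier G = carrier (G Mod K)"
  by (simp add: carrier_FactGroup)

lemma Q0:
  assumes K: "K \<lhd> G" and Y: "subgroup Y G" and KY: "K \<subseteq> Y" and x: "x \<in> carrier G"
  shows "K #> x \<in> (\<lambda>a. K #> a) ` Y \<longleftrightarrow> x \<in> Y"
proof
  assume "K #> x \<in> (\<lambda>a. K #> a) ` Y"
  then obtain y where y: "y \<in> Y" "K #> x = K #> y" by (rule imageE) simp
  have yc: "y \<in> carrier G" by (rule subgroup.mem_carrier[OF Y y(1)])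
  have k: "x \<otimes> inv y \<in> K" by (rule rcos_eq_imp[OF nsub[OF K] x yc y(2)])
  have "x \<otimes> inv y \<in> Y" using k KY by (rule subsetD[rotated])
  hence "x \<otimes> inv y \<otimes> y \<in> Y" by (rule subgroup.m_closed[OF Y _ y(1)])
  moreover have "x \<otimes> inv y \<otimes> y = x" by (rule cancel_r''[OF x yc])
  ultimately show "x \<in> Y" by simp
next
  assume "x \<in> Y" thus "K #> x \<in> (\<lambda>a. K #> a) ` Y" by (rule imageI)
qed

lemma Q1:
  assumes K: "K \<lhd> G" and S: "subgroup S G" and KX: "K \<subseteq> S"
  shows "\<Union> ((\<lambda>a. K #> a) ` S) = S"
proof
  show "\<Union> ((\<lambda>a. K #> a) ` S) \<subseteq> S"
  proof
    fix z assume "z \<in> \<Union> ((\<lambda>a. K #> a) ` S)"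
    then obtain x where x: "x \<in> S" "z \<in> K #> x" by auto
    obtain k where k: "k \<in> K" "z = k \<otimes> x" using x(2) by (rule rcos_memE)
    have kS: "k \<in> S" using KX k by blast
    show "z \<in> S" using subgroup.m_closed[OF S kS x(1)] k by simp
  qed
  show "S \<subseteq> \<Union> ((\<lambda>a. K #> a) ` S)"
  proof
    fix x assume x: "x \<in> S"
    hence "x \<in> K #> x" using rcos_self[OF _ nsub[OF K]] subgroup.mem_carrier[OF S] by blast
    thus "x \<in> \<Union> ((\<lambda>a. K #> a) ` S)" using x by blast
  qed
qed

lemma Q_factor:
  assumes K: "K \<lhd> G" and A: "subgroup \<A> (G Mod K)"
  shows "(\<lambda>a. K #> a) ` (\<Union>\<A>) = \<A>"
proof -
  have e: "\<A> = rcosets\<^bsub>G\<lparr>carrier := \<Union>\<A>\<rparr>\<^esub> K" by (rule normal.factgroup_subgroup_union_factor[OF K A])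
  have e2: "rcosets\<^bsub>G\<lparr>carrier := \<Union>\<A>\<rparr>\<^esub> K = (\<lambda>a. K #> a) ` (\<Union>\<A>)" unfolding RCOSETS_def by auto
  show ?thesis by (rule sym[OF trans[OF e e2]])
qed

lemma Q_union_normal: "K \<lhd> G \<Longrightarrow> \<A> \<lhd> G Mod K \<Longrightarrow> \<Union>\<A> \<lhd> G"
  by (rule normal.factgroup_subgroup_union_normal)

lemma Q_normal: "K \<lhd> G \<Longrightarrow> S \<lhd> G \<Longrightarrow> (\<lambda>a. K #> a) ` S \<lhd> G Mod K"
  by (rule normal.surj_hom_normal_subgroup[OF _ pi_hom pi_surj])

lemma Q_chief:
  assumes K: "K \<lhd> G" and ch: "chief_factor G A B" and KB: "K \<subseteq> B"
  shows "chief_factor (G Mod K) ((\<lambda>a. K #> a) ` A) ((\<lambda>a. K #> a) ` B)"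
proof -
  have A: "A \<lhd> G" and B: "B \<lhd> G" and BA: "B \<subseteq> A" and ne: "B \<noteq> A" using chief_sub[OF ch] by auto
  have KA: "K \<subseteq> A" using KB BA by blast
  have uA: "\<Union> ((\<lambda>a. K #> a) ` A) = A" by (rule Q1[OF K nsub[OF A] KA])
  have uB: "\<Union> ((\<lambda>a. K #> a) ` B) = B" by (rule Q1[OF K nsub[OF B] KB])
  have ne': "(\<lambda>a. K #> a) ` B \<noteq> (\<lambda>a. K #> a) ` A"
  proof
    assume "(\<lambda>a. K #> a) ` B = (\<lambda>a. K #> a) ` A"
    hence "\<Union> ((\<lambda>a. K #> a) ` B) = \<Union> ((\<lambda>a. K #> a) ` A)" by simp
    thus False using uA uB ne by simp
  qed
  have mx: "\<N> = (\<lambda>a. K #> a) ` B \<or> \<N> = (\<lambda>a. K #> a) ` A"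
    if N: "\<N> \<lhd> G Mod K" "(\<lambda>a. K #> a) ` B \<subseteq> \<N>" "\<N> \<subseteq> (\<lambda>a. K #> a) ` A" for \<N>
  proof -
    have nU: "\<Union>\<N> \<lhd> G" by (rule Q_union_normal[OF K N(1)])
    have "\<Union> ((\<lambda>a. K #> a) ` B) \<subseteq> \<Union>\<N>" by (rule Union_mono[OF N(2)])
    hence s1: "B \<subseteq> \<Union>\<N>" using uB by simp
    have "\<Union>\<N> \<subseteq> \<Union> ((\<lambda>a. K #> a) ` A)" by (rule Union_mono[OF N(3)])
    hence s2: "\<Union>\<N> \<subseteq> A" using uA by simp
    have c: "\<Union>\<N> = B \<or> \<Union>\<N> = A" by (rule chief_max[OF ch nU s1 s2])
    have f: "(\<lambda>a. K #> a) ` (\<Union>\<N>) = \<N>" by (rule Q_factor[OF K normal_imp_subgroup[OF N(1)]])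
    show ?thesis
    proof (cases "\<Union>\<N> = B")
      case True thus ?thesis using f by simp
    next
      case False hence "\<Union>\<N> = A" using c by simp
      thus ?thesis using f by simp
    qed
  qed
  have 1: "(\<lambda>a. K #> a) ` A \<lhd> G Mod K" by (rule Q_normal[OF K A])
  have 2: "(\<lambda>a. K #> a) ` B \<lhd> G Mod K" by (rule Q_normal[OF K B])
  have 3: "(\<lambda>a. K #> a) ` B \<subset> (\<lambda>a. K #> a) ` A"
    unfolding psubset_eq using image_mono[OF BA, of "\<lambda>a. K #> a"] ne' by simp
  have 4: "\<forall>N. N \<lhd> G Mod K \<and> (\<lambda>a. K #> a) ` B \<subseteq> N \<and> N \<subseteq> (\<lambda>a. K #> a) ` A \<longrightarrow>
       N = (\<lambda>a. K #> a) ` B \<or> N = (\<lambda>a. K #> a) ` A"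
    by (intro allI impI, elim conjE) (rule mx)
  show ?thesis unfolding chief_factor_def using 1 2 3 4 by simp
qed

end


definition cent_in :: "('c, 'd) monoid_scheme \<Rightarrow> 'c set \<Rightarrow> 'c set \<Rightarrow> 'c set" where
  "cent_in G A S = {u \<in> A. \<forall>s \<in> S. u \<otimes>\<^bsub>G\<^esub> s = s \<otimes>\<^bsub>G\<^esub> u}"

lemma (in group) comm_commutator:
  assumes x: "x \<in> carrier G" and y: "y \<in> carrier G" and e: "x \<otimes> y = y \<otimes> x"
  shows "x \<otimes> y \<otimes> inv x \<otimes> inv y = \<one>"
proof -
  have "x \<otimes> y \<otimes> inv x \<otimes> inv y = y \<otimes> x \<otimes> inv x \<otimes> inv y" using e by simp
  also have "\<dots> = \<one>" using x y by (simp add: m_assoc cancel_l')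
  finally show ?thesis .
qed

lemma (in group) cent_normal:
  assumes A: "A \<lhd> G" and S: "S \<lhd> G"
  shows "cent_in G A S \<lhd> G"
proof -
  interpret A: normal A G by (rule A)
  interpret S: normal S G by (rule S)
  have sub: "subgroup (cent_in G A S) G"
  proof (rule subgroupI)
    show "cent_in G A S \<subseteq> carrier G" unfolding cent_in_def using A.subset by blast
    have "\<one> \<in> cent_in G A S" unfolding cent_in_def using S.subset by auto
    thus "cent_in G A S \<noteq> {}" by blast
  next
    fix u assume u: "u \<in> cent_in G A S"
    hence uA: "u \<in> A" and uc: "\<forall>s \<in> S. u \<otimes> s = s \<otimes> u" unfolding cent_in_def by auto
    have ucar: "u \<in> carrier G" using uA A.subset by blast
    have "inv u \<otimes> s = s \<otimes> inv u" if s: "s \<in> S" for s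
    proof -
      have sc: "s \<in> carrier G" using s S.subset by blast
      have "inv u \<otimes> s = inv u \<otimes> (s \<otimes> u) \<otimes> inv u" using ucar sc by (simp add: m_assoc)
      also have "\<dots> = inv u \<otimes> (u \<otimes> s) \<otimes> inv u" using uc s by simp
      also have "\<dots> = s \<otimes> inv u" using ucar sc by (simp add: m_assoc cancel_l)
      finally show ?thesis .
    qed
    thus "inv u \<in> cent_in G A S" unfolding cent_in_def using uA by simp
  next
    fix u v assume u: "u \<in> cent_in G A S" and v: "v \<in> cent_in G A S"
    hence uA: "u \<in> A" and uc: "\<forall>s \<in> S. u \<otimes> s = s \<otimes> u"
      and vA: "v \<in> A" and vc: "\<forall>s \<in> S. v \<otimes> s = s \<otimes> v" unfolding cent_in_def by auto
    have ucar: "u \<in> carrier G" and vcar: "v \<in> carrier G" using uA vA A.subset by auto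
    have "u \<otimes> v \<otimes> s = s \<otimes> (u \<otimes> v)" if s: "s \<in> S" for s
    proof -
      have sc: "s \<in> carrier G" using s S.subset by blast
      have "u \<otimes> v \<otimes> s = u \<otimes> (v \<otimes> s)" using ucar vcar sc by (simp add: m_assoc)
      also have "\<dots> = u \<otimes> (s \<otimes> v)" using vc s by simp
      also have "\<dots> = (u \<otimes> s) \<otimes> v" using ucar vcar sc by (simp add: m_assoc)
      also have "\<dots> = (s \<otimes> u) \<otimes> v" using uc s by simp
      also have "\<dots> = s \<otimes> (u \<otimes> v)" using ucar vcar sc by (simp add: m_assoc)
      finally show ?thesis .
    qed
    thus "u \<otimes> v \<in> cent_in G A S" unfolding cent_in_def using uA vA A.m_closed by simp
  qed
  show ?thesis unfolding normal_inv_iff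
  proof (intro conjI ballI)
    show "subgroup (cent_in G A S) G" by (rule sub)
    fix x u assume x: "x \<in> carrier G" and u: "u \<in> cent_in G A S"
    hence uA: "u \<in> A" and uc: "\<forall>s \<in> S. u \<otimes> s = s \<otimes> u" unfolding cent_in_def by auto
    have ucar: "u \<in> carrier G" using uA A.subset by blast
    have "x \<otimes> u \<otimes> inv x \<otimes> s = s \<otimes> (x \<otimes> u \<otimes> inv x)" if s: "s \<in> S" for s
    proof -
      have sc: "s \<in> carrier G" using s S.subset by blast
      define s' where "s' = inv x \<otimes> s \<otimes> x"
      have s'S: "s' \<in> S" unfolding s'_def by (rule S.inv_op_closed1[OF x s])
      have s'c: "s' \<in> carrier G" using s'S S.subset by blast
      have e: "u \<otimes> s' = s' \<otimes> u" using uc s'S by simp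
      have ss: "s = x \<otimes> s' \<otimes> inv x" unfolding s'_def using x sc by (simp add: m_assoc cancel_l')
      have "x \<otimes> u \<otimes> inv x \<otimes> s = x \<otimes> (u \<otimes> s') \<otimes> inv x"
        unfolding ss using x ucar s'c by (simp add: m_assoc cancel_l)
      also have "\<dots> = x \<otimes> (s' \<otimes> u) \<otimes> inv x" using e by simp
      also have "\<dots> = s \<otimes> (x \<otimes> u \<otimes> inv x)"
        unfolding ss using x ucar s'c by (simp add: m_assoc cancel_l)
      finally show ?thesis .
    qed
    moreover have "x \<otimes> u \<otimes> inv x \<in> A" by (rule A.inv_op_closed2[OF x uA])
    ultimately show "x \<otimes> u \<otimes> inv x \<in> cent_in G A S" unfolding cent_in_def by simp
  qed
qed


context mgroup begin

lemma pi_one_iff: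
  assumes N: "N \<lhd> G" and x: "x \<in> carrier G" shows "N #> x = N \<longleftrightarrow> x \<in> N"
proof
  assume "N #> x = N" thus "x \<in> N" by (rule coset_join1[OF _ x nsub[OF N]])
next
  assume "x \<in> N" thus "N #> x = N" by (rule coset_join2[OF x nsub[OF N]])
qed

lemma Dsub: "subgroup ((derived G ^^ m) (carrier G)) G"
  by (rule exp_of_derived_is_subgroup[OF subgroup_self])

lemma Ddec: "(derived G ^^ Suc m) (carrier G) \<subseteq> (derived G ^^ m) (carrier G)"
  using derived_incl[OF subset_refl Dsub[of m]] by simp

lemma Dmono: "m \<le> m' \<Longrightarrow> (derived G ^^ m') (carrier G) \<subseteq> (derived G ^^ m) (carrier G)"
proof (induction m' rule: dec_induct)
  case base thus ?case by simp
next
  case (step k) thus ?case using Ddec[of k] by blast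
qed

lemma Dnorm: "(derived G ^^ m) (carrier G) \<lhd> G"
proof (induction m)
  case 0 thus ?case using normal_self by simp
next
  case (Suc m) thus ?case using derived_is_normal[OF Suc.IH] by simp
qed

lemma solv_iff:
  assumes N: "N \<lhd> G"
  shows "solvable (G Mod N) \<longleftrightarrow> (\<exists>m. (derived G ^^ m) (carrier G) \<subseteq> N)"
proof -
  interpret h: group_hom G "G Mod N" "\<lambda>a. N #> a" by (rule pi_hom[OF N])
  have img: "(derived (G Mod N) ^^ m) (carrier (G Mod N)) = (\<lambda>a. N #> a) ` ((derived G ^^ m) (carrier G))" for m
    using h.exp_of_derived_img[OF subset_refl, of m] pi_surj[of N] by simp
  have eq: "(\<lambda>a. N #> a) ` ((derived G ^^ m) (carrier G)) = {N} \<longleftrightarrow> (derived G ^^ m) (carrier G) \<subseteq> N" for m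
  proof -
    have ne: "\<one> \<in> (derived G ^^ m) (carrier G)" by (rule subgroup.one_closed[OF Dsub])
    have sub: "(derived G ^^ m) (carrier G) \<subseteq> carrier G" by (rule subgroup.subset[OF Dsub])
    show ?thesis
    proof
      assume a: "(\<lambda>a. N #> a) ` ((derived G ^^ m) (carrier G)) = {N}"
      show "(derived G ^^ m) (carrier G) \<subseteq> N"
      proof
        fix x assume x: "x \<in> (derived G ^^ m) (carrier G)"
        hence "N #> x = N" using a by blast
        thus "x \<in> N" using pi_one_iff[OF N] sub x by blast
      qed
    next
      assume a: "(derived G ^^ m) (carrier G) \<subseteq> N"
      have "\<forall>x \<in> (derived G ^^ m) (carrier G). N #> x = N" using pi_one_iff[OF N] sub a by blast
      thus "(\<lambda>a. N #> a) ` ((derived G ^^ m) (carrier G)) = {N}" using ne by blast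
    qed
  qed
  have "solvable (G Mod N) \<longleftrightarrow> (\<exists>m. (derived (G Mod N) ^^ m) (carrier (G Mod N)) = {\<one>\<^bsub>G Mod N\<^esub>})"
    by (rule group.solvable_iff_trivial_derived_seq[OF normal.factorgroup_is_group[OF N]])
  also have "\<dots> \<longleftrightarrow> (\<exists>m. (derived G ^^ m) (carrier G) \<subseteq> N)" using img eq by simp
  finally show ?thesis .
qed

lemma SR:
  assumes fin: "finite (carrier G)"
  shows "\<exists>n. sol_res G = (derived G ^^ n) (carrier G) \<and> (\<forall>m. (derived G ^^ n) (carrier G) \<subseteq> (derived G ^^ m) (carrier G))"
proof -
  define D where "D = (\<lambda>m. (derived G ^^ m) (carrier G))"
  have "\<exists>x. True \<and> (\<forall>y. True \<longrightarrow> card (D x) \<le> card (D y))"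
    by (rule ex_has_least_nat[of "\<lambda>_. True" 0 "\<lambda>m. card (D m)"]) simp
  then obtain n where n: "\<forall>m. card (D n) \<le> card (D m)" by auto
  have finD: "finite (D m)" for m using finite_subset[OF subgroup.subset[OF Dsub] fin] unfolding D_def .
  have le: "D n \<subseteq> D m" for m
  proof (cases "m \<le> n")
    case True thus ?thesis unfolding D_def by (rule Dmono)
  next
    case False
    hence nm: "n \<le> m" by simp
    have s: "D m \<subseteq> D n" unfolding D_def by (rule Dmono[OF nm])
    have c: "card (D n) \<le> card (D m)" by (rule spec[OF n])
    have "D m = D n" by (rule card_subset_eq[OF finD s]) (use c card_mono[OF finD s] in simp)
    thus ?thesis by simp
  qed
  have "sol_res G = D n"
    unfolding sol_res_def
  proof (rule Least_equality)
    have "solvable (G Mod D n)" unfolding D_def using solv_iff[OF Dnorm[of n]] by blast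
    thus "D n \<lhd> G \<and> solvable (G Mod D n)" unfolding D_def using Dnorm[of n] by simp
    fix N assume a: "N \<lhd> G \<and> solvable (G Mod N)"
    hence "\<exists>m. D m \<subseteq> N" using solv_iff[of N] unfolding D_def by simp
    then obtain m where "D m \<subseteq> N" by blast
    thus "D n \<le> N" using le[of m] by simp
  qed
  thus ?thesis using le unfolding D_def by blast
qed


lemma comm_iff:
  assumes N: "N \<lhd> G" and a: "a \<in> carrier G" and b: "b \<in> carrier G"
  shows "(N #> a) <#> (N #> b) = (N #> b) <#> (N #> a) \<longleftrightarrow> a \<otimes> b \<otimes> inv a \<otimes> inv b \<in> N"
proof -
  interpret N: normal N G by (rule N)
  have "(N #> a) <#> (N #> b) = (N #> b) <#> (N #> a) \<longleftrightarrow> N #> (a \<otimes> b) = N #> (b \<otimes> a)"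
    using N.rcos_sum a b by simp
  also have "\<dots> \<longleftrightarrow> a \<otimes> b \<otimes> inv (b \<otimes> a) \<in> N"
    using rcos_eq_imp[OF nsub[OF N]] rcos_eqI[OF nsub[OF N]] a b by (meson m_closed)
  also have "a \<otimes> b \<otimes> inv (b \<otimes> a) = a \<otimes> b \<otimes> inv a \<otimes> inv b"
    using a b by (simp add: inv_mult_group m_assoc)
  finally show ?thesis .
qed

lemma Cen_eq: "centralizer (sect G H Z) S = cent_in (G Mod Z) ((\<lambda>a. Z #> a) ` H) S"
  unfolding centralizer_def cent_in_def sect_carrier sect_mult by simp

lemma Y_eq: "(sect G H Z)\<lparr>carrier := U\<rparr> = (G Mod Z)\<lparr>carrier := U\<rparr>"
  by (simp add: sect_eq)

lemma kernel_pi: "N \<lhd> G \<Longrightarrow> kernel G (G Mod N) (\<lambda>a. N #> a) = N"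
  unfolding kernel_def using pi_one_iff nsubset by auto

lemma R_struct:
  assumes fin: "finite (carrier G)" and Z: "Z \<lhd> G" and H: "H \<lhd> G" and T: "T \<lhd> G"
  defines "Cen \<equiv> cent_in (G Mod Z) ((\<lambda>a. Z #> a) ` H) ((\<lambda>a. Z #> a) ` T)"
  shows "Cen \<lhd> G Mod Z \<and> (\<exists>n. sol_res ((G Mod Z)\<lparr>carrier := Cen\<rparr>) = (derived (G Mod Z) ^^ n) Cen \<and>
           (\<forall>m. (derived (G Mod Z) ^^ n) Cen \<subseteq> (derived (G Mod Z) ^^ m) Cen))"
proof -
  interpret Gb: mgroup "G Mod Z" unfolding mgroup_def by (rule normal.factorgroup_is_group[OF Z])
  have nC: "Cen \<lhd> G Mod Z" unfolding Cen_def by (rule Gb.cent_normal[OF Q_normal[OF Z H] Q_normal[OF Z T]])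
  have sC: "subgroup Cen (G Mod Z)" by (rule normal_imp_subgroup[OF nC])
  interpret Y: mgroup "(G Mod Z)\<lparr>carrier := Cen\<rparr>" unfolding mgroup_def by (rule Gb.subgroup_imp_group[OF sC])
  have finb: "finite (carrier (G Mod Z))" unfolding carrier_FactGroup using fin by simp
  have finY: "finite (carrier ((G Mod Z)\<lparr>carrier := Cen\<rparr>))" using finite_subset[OF subgroup.subset[OF sC] finb] by simp
  have eqD: "(derived ((G Mod Z)\<lparr>carrier := Cen\<rparr>) ^^ m) Cen = (derived (G Mod Z) ^^ m) Cen \<and>
             (derived (G Mod Z) ^^ m) Cen \<subseteq> Cen" for m
  proof (induction m)
    case 0 thus ?case by simp
  next
    case (Suc m)
    have e: "(derived ((G Mod Z)\<lparr>carrier := Cen\<rparr>) ^^ Suc m) Cen = derived (G Mod Z) ((derived (G Mod Z) ^^ m) Cen)"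
      using Gb.derived_consistent[OF conjunct2[OF Suc.IH] sC] conjunct1[OF Suc.IH] by simp
    have "derived (G Mod Z) ((derived (G Mod Z) ^^ m) Cen) \<subseteq> Cen"
      by (rule Gb.derived_incl[OF conjunct2[OF Suc.IH] sC])
    thus ?case using e by simp
  qed
  obtain n where n: "sol_res ((G Mod Z)\<lparr>carrier := Cen\<rparr>) = (derived ((G Mod Z)\<lparr>carrier := Cen\<rparr>) ^^ n) Cen"
     "\<forall>m. (derived ((G Mod Z)\<lparr>carrier := Cen\<rparr>) ^^ n) Cen \<subseteq> (derived ((G Mod Z)\<lparr>carrier := Cen\<rparr>) ^^ m) Cen"
    using Y.SR[OF finY] by auto
  show ?thesis using nC n eqD by metis
qed


lemma derived_set_mem: "a \<in> S \<Longrightarrow> b \<in> S \<Longrightarrow> a \<otimes> b \<otimes> inv a \<otimes> inv b \<in> derived G S"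
  unfolding derived_def by (rule generate.incl) blast

lemma ABEL:
  assumes T: "T \<lhd> G" and Z2: "Z2 \<lhd> G" and HZT: "H = Z2 <#> T" and W: "derived G Z2 \<subseteq> T"
  shows "comm_group (sect G H T)"
proof -
  interpret T: normal T G by (rule T)
  interpret ht: group_hom G "G Mod T" "\<lambda>a. T #> a" by (rule pi_hom[OF T])
  have nH: "H \<lhd> G" unfolding HZT by (rule normal_subgroup_set_mult_closed[OF Z2 T])
  have sH: "subgroup ((\<lambda>a. T #> a) ` H) (G Mod T)" by (rule ht.subgroup_img_is_subgroup[OF nsub[OF nH]])
  have grp: "group (sect G H T)" unfolding sect_eq by (rule group.subgroup_imp_group[OF ht.H.is_group sH])
  have red: "\<exists>z \<in> Z2. T #> h = T #> z" if h: "h \<in> H" for h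
  proof -
    obtain z t where zt: "z \<in> Z2" "t \<in> T" "h = z \<otimes> t" using h unfolding HZT by (rule sm_memE)
    have zc: "z \<in> carrier G" and tc: "t \<in> carrier G" using zt nsubset[OF Z2] T.subset by auto
    have hi: "h \<otimes> inv z \<in> T" unfolding zt(3) by (rule T.inv_op_closed2[OF zc zt(2)])
    have hc: "h \<in> carrier G" using zt zc tc by simp
    have "T #> h = T #> z" by (rule rcos_eqI[OF T.subgroup_axioms hc zc hi])
    thus ?thesis using zt by blast
  qed
  show ?thesis
  proof (rule group.group_comm_groupI[OF grp])
    fix U V assume "U \<in> carrier (sect G H T)" "V \<in> carrier (sect G H T)"
    then obtain h k where hk: "h \<in> H" "U = T #> h" "k \<in> H" "V = T #> k" unfolding sect_carrier by auto
    obtain z where z: "z \<in> Z2" "T #> h = T #> z" using red[OF hk(1)] by blast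
    obtain z' where z': "z' \<in> Z2" "T #> k = T #> z'" using red[OF hk(3)] by blast
    have zc: "z \<in> carrier G" "z' \<in> carrier G" using z z' nsubset[OF Z2] by auto
    have "z \<otimes> z' \<otimes> inv z \<otimes> inv z' \<in> T" using derived_set_mem[OF z(1) z'(1)] W by blast
    hence "(T #> z) <#> (T #> z') = (T #> z') <#> (T #> z)" using comm_iff[OF T zc] by simp
    thus "U \<otimes>\<^bsub>sect G H T\<^esub> V = V \<otimes>\<^bsub>sect G H T\<^esub> U" unfolding sect_mult hk(2,4) z(2) z'(2) .
  qed
qed

lemma CA:
  assumes fin: "finite (carrier G)" and Z1: "Z1 \<lhd> G" and Z2: "Z2 \<lhd> G" and H: "H \<lhd> G" and T: "T \<lhd> G"
    and chZ: "chief_factor G Z2 Z1" and HZT: "H = Z2 <#> T" and Z2T: "Z2 \<inter> T = Z1"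
    and nc: "\<not> comm_group (sect G H T)"
  defines "Cen \<equiv> cent_in (G Mod Z1) ((\<lambda>a. Z1 #> a) ` H) ((\<lambda>a. Z1 #> a) ` T)"
  shows "sol_res ((G Mod Z1)\<lparr>carrier := Cen\<rparr>) = (\<lambda>a. Z1 #> a) ` Z2"
proof -
  interpret Gb: mgroup "G Mod Z1" unfolding mgroup_def by (rule normal.factorgroup_is_group[OF Z1])
  interpret h1: group_hom G "G Mod Z1" "\<lambda>a. Z1 #> a" by (rule pi_hom[OF Z1])
  interpret nZ1: normal Z1 G by (rule Z1)
  interpret nZ2: normal Z2 G by (rule Z2)
  interpret nT: normal T G by (rule T)
  have RS: "Cen \<lhd> G Mod Z1 \<and> (\<exists>n. sol_res ((G Mod Z1)\<lparr>carrier := Cen\<rparr>) = (derived (G Mod Z1) ^^ n) Cen \<and>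
           (\<forall>m. (derived (G Mod Z1) ^^ n) Cen \<subseteq> (derived (G Mod Z1) ^^ m) Cen))"
    unfolding Cen_def by (rule R_struct[OF fin Z1 H T])
  have nC: "Cen \<lhd> G Mod Z1" using RS by blast
  have sC: "subgroup Cen (G Mod Z1)" by (rule normal_imp_subgroup[OF nC])
  obtain n where n: "sol_res ((G Mod Z1)\<lparr>carrier := Cen\<rparr>) = (derived (G Mod Z1) ^^ n) Cen"
    "\<forall>m. (derived (G Mod Z1) ^^ n) Cen \<subseteq> (derived (G Mod Z1) ^^ m) Cen" using RS by blast
  have Z12: "Z1 \<subseteq> Z2" using chief_sub[OF chZ] by blast
  have Z2H: "Z2 \<subseteq> H" unfolding HZT by (rule sm_sup_l[OF nT.subgroup_axioms nZ2.subset])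
  have TH: "T \<subseteq> H" unfolding HZT by (rule sm_sup_r[OF nZ2.subgroup_axioms nT.subset])
  have nZt: "(\<lambda>a. Z1 #> a) ` Z2 \<lhd> G Mod Z1" by (rule Q_normal[OF Z1 Z2])
  have sZt: "subgroup ((\<lambda>a. Z1 #> a) ` Z2) (G Mod Z1)" by (rule normal_imp_subgroup[OF nZt])
  have CenD: "U \<in> Cen \<longleftrightarrow> U \<in> (\<lambda>a. Z1 #> a) ` H \<and> (\<forall>S \<in> (\<lambda>a. Z1 #> a) ` T. U <#> S = S <#> U)" for U
    unfolding Cen_def cent_in_def by simp
  have ZtCen: "(\<lambda>a. Z1 #> a) ` Z2 \<subseteq> Cen"
  proof
    fix U assume "U \<in> (\<lambda>a. Z1 #> a) ` Z2"
    then obtain z where z: "z \<in> Z2" "U = Z1 #> z" by blast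
    have zc: "z \<in> carrier G" using z nZ2.subset by blast
    have "U <#> S = S <#> U" if S: "S \<in> (\<lambda>a. Z1 #> a) ` T" for S
    proof -
      obtain t where t: "t \<in> T" "S = Z1 #> t" using S by blast
      have tc: "t \<in> carrier G" using t nT.subset by blast
      have "z \<otimes> t \<otimes> inv z \<otimes> inv t \<in> T"
        using nT.m_closed[OF nT.inv_op_closed2[OF zc t(1)] nT.m_inv_closed[OF t(1)]] .
      moreover have "z \<otimes> t \<otimes> inv z \<otimes> inv t = z \<otimes> (t \<otimes> inv z \<otimes> inv t)" using zc tc by (simp add: m_assoc)
      moreover have "z \<otimes> (t \<otimes> inv z \<otimes> inv t) \<in> Z2"
        using nZ2.m_closed[OF z(1) nZ2.inv_op_closed2[OF tc nZ2.m_inv_closed[OF z(1)]]] .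
      ultimately have "z \<otimes> t \<otimes> inv z \<otimes> inv t \<in> Z1" using Z2T by auto
      thus ?thesis unfolding z(2) t(2) using comm_iff[OF Z1 zc tc] by simp
    qed
    moreover have "U \<in> (\<lambda>a. Z1 #> a) ` H" using z Z2H by blast
    ultimately show "U \<in> Cen" using CenD by blast
  qed
  have perf: "derived (G Mod Z1) ((\<lambda>a. Z1 #> a) ` Z2) = (\<lambda>a. Z1 #> a) ` Z2"
  proof -
    define W where "W = derived G Z2"
    have nW: "W \<lhd> G" unfolding W_def by (rule derived_is_normal[OF Z2])
    have WZ2: "W \<subseteq> Z2" unfolding W_def by (rule derived_incl[OF subset_refl nZ2.subgroup_axioms])
    have nWZ: "W <#> Z1 \<lhd> G" by (rule normal_subgroup_set_mult_closed[OF nW Z1])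
    have s1: "Z1 \<subseteq> W <#> Z1" by (rule sm_sup_r[OF nsub[OF nW] nZ1.subset])
    have s2: "W <#> Z1 \<subseteq> Z2" by (rule sm_subset_sub[OF nZ2.subgroup_axioms WZ2 Z12])
    have c: "W <#> Z1 = Z1 \<or> W <#> Z1 = Z2" by (rule chief_max[OF chZ nWZ s1 s2])
    have "W <#> Z1 = Z2"
    proof (rule ccontr)
      assume "W <#> Z1 \<noteq> Z2"
      hence "W <#> Z1 = Z1" using c by blast
      hence "W \<subseteq> T" using sm_sup_l[OF nZ1.subgroup_axioms nsubset[OF nW]] Z2T by blast
      hence "comm_group (sect G H T)" unfolding W_def by (rule ABEL[OF T Z2 HZT])
      thus False using nc by blast
    qed
    have "derived (G Mod Z1) ((\<lambda>a. Z1 #> a) ` Z2) = (\<lambda>a. Z1 #> a) ` W"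
      unfolding W_def by (rule h1.derived_img[OF nZ2.subset])
    also have "\<dots> = (\<lambda>a. Z1 #> a) ` (W <#> kernel G (G Mod Z1) (\<lambda>a. Z1 #> a))"
      by (rule h1.set_mult_ker_hom(1)[OF nsubset[OF nW], symmetric])
    also have "\<dots> = (\<lambda>a. Z1 #> a) ` Z2" using kernel_pi[OF Z1] \<open>W <#> Z1 = Z2\<close> by simp
    finally show ?thesis .
  qed
  have ZtD: "(\<lambda>a. Z1 #> a) ` Z2 \<subseteq> (derived (G Mod Z1) ^^ m) Cen" for m
  proof (induction m)
    case 0 thus ?case using ZtCen by simp
  next
    case (Suc m)
    have "derived (G Mod Z1) ((\<lambda>a. Z1 #> a) ` Z2) \<subseteq> derived (G Mod Z1) ((derived (G Mod Z1) ^^ m) Cen)"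
      by (rule Gb.mono_derived[OF Suc.IH])
    thus ?case using perf by simp
  qed
  have D1: "derived (G Mod Z1) Cen \<subseteq> (\<lambda>a. Z1 #> a) ` Z2"
    unfolding derived_def
  proof (rule Gb.generate_subgroup_incl[OF _ sZt])
    show "derived_set (G Mod Z1) Cen \<subseteq> (\<lambda>a. Z1 #> a) ` Z2"
    proof
      fix Xd assume "Xd \<in> derived_set (G Mod Z1) Cen"
      then obtain U V where UV: "U \<in> Cen" "V \<in> Cen"
        "Xd = U \<otimes>\<^bsub>G Mod Z1\<^esub> V \<otimes>\<^bsub>G Mod Z1\<^esub> inv\<^bsub>G Mod Z1\<^esub> U \<otimes>\<^bsub>G Mod Z1\<^esub> inv\<^bsub>G Mod Z1\<^esub> V" by blast
      obtain h where h: "h \<in> H" "U = Z1 #> h" using UV(1) CenD by blast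
      obtain k where k: "k \<in> H" "V = Z1 #> k" using UV(2) CenD by blast
      have hc: "h \<in> carrier G" and kc: "k \<in> carrier G" using h k nsubset[OF H] by auto
      have Xe: "Xd = Z1 #> (h \<otimes> k \<otimes> inv h \<otimes> inv k)" unfolding UV(3) h(2) k(2) using hc kc by simp
      have red: "\<exists>t \<in> T. t \<in> carrier G \<and> Z2 #> h' = Z2 #> t \<and> Z1 #> t \<in> Cen"
        if h': "h' \<in> H" "Z1 #> h' \<in> Cen" for h'
      proof -
        obtain z t where zt: "z \<in> Z2" "t \<in> T" "h' = z \<otimes> t" using h'(1) unfolding HZT by (rule sm_memE)
        have zc: "z \<in> carrier G" and tc: "t \<in> carrier G" using zt nZ2.subset nT.subset by auto
        have hi: "h' \<otimes> inv t \<in> Z2" unfolding zt(3) using cancel_r[OF zc tc] zt(1) by simp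
        have hc: "h' \<in> carrier G" using zt zc tc by simp
        have e2: "Z2 #> h' = Z2 #> t" by (rule rcos_eqI[OF nZ2.subgroup_axioms hc tc hi])
        have te: "t = inv z \<otimes> h'" unfolding zt(3) by (rule cancel_l[OF zc tc, symmetric])
        have "(Z1 #> inv z) <#> (Z1 #> h') = Z1 #> (inv z \<otimes> h')" by (rule nZ1.rcos_sum) (use zc hc in auto)
        hence "Z1 #> t = (Z1 #> inv z) <#> (Z1 #> h')" using te by simp
        moreover have "Z1 #> inv z \<in> Cen" using ZtCen nZ2.m_inv_closed[OF zt(1)] by blast
        ultimately have "Z1 #> t \<in> Cen" using subgroup.m_closed[OF sC _ h'(2)] by simp
        thus ?thesis using zt tc e2 by blast
      qed
      obtain t where t: "t \<in> T" "t \<in> carrier G" "Z2 #> h = Z2 #> t" "Z1 #> t \<in> Cen"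
        using red[OF h(1)] UV(1) h(2) by blast
      obtain t' where t': "t' \<in> T" "t' \<in> carrier G" "Z2 #> k = Z2 #> t'"
        using red[OF k(1)] UV(2) k(2) by blast
      have "(Z1 #> t) <#> (Z1 #> t') = (Z1 #> t') <#> (Z1 #> t)" using t(4) t'(1) CenD by blast
      hence "t \<otimes> t' \<otimes> inv t \<otimes> inv t' \<in> Z1" using comm_iff[OF Z1 t(2) t'(2)] by simp
      hence "t \<otimes> t' \<otimes> inv t \<otimes> inv t' \<in> Z2" using Z12 by blast
      hence "(Z2 #> t) <#> (Z2 #> t') = (Z2 #> t') <#> (Z2 #> t)" using comm_iff[OF Z2 t(2) t'(2)] by simp
      hence "h \<otimes> k \<otimes> inv h \<otimes> inv k \<in> Z2" using comm_iff[OF Z2 hc kc] t(3) t'(3) by simp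
      thus "Xd \<in> (\<lambda>a. Z1 #> a) ` Z2" unfolding Xe by blast
    qed
  qed
  have "sol_res ((G Mod Z1)\<lparr>carrier := Cen\<rparr>) \<subseteq> (\<lambda>a. Z1 #> a) ` Z2"
    using n D1 spec[OF n(2), of 1] by simp
  moreover have "(\<lambda>a. Z1 #> a) ` Z2 \<subseteq> sol_res ((G Mod Z1)\<lparr>carrier := Cen\<rparr>)" using ZtD n by simp
  ultimately show ?thesis by blast
qed


lemma CB:
  assumes fin: "finite (carrier G)" and Z1: "Z1 \<lhd> G" and H: "H \<lhd> G" and T: "T \<lhd> G"
    and Z1T: "Z1 \<subseteq> T" and TH: "T \<subseteq> H"
  defines "Cen \<equiv> cent_in (G Mod Z1) ((\<lambda>a. Z1 #> a) ` H) ((\<lambda>a. Z1 #> a) ` T)"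
  defines "R \<equiv> sol_res ((G Mod Z1)\<lparr>carrier := Cen\<rparr>)"
  shows "\<Union>R \<lhd> G \<and> Z1 \<subseteq> \<Union>R \<and> \<Union>R \<subseteq> H \<and> (\<lambda>a. Z1 #> a) ` (\<Union>R) = R \<and> (\<Union>R \<subseteq> T \<longrightarrow> card R \<le> 1)"
proof -
  interpret Gb: mgroup "G Mod Z1" unfolding mgroup_def by (rule normal.factorgroup_is_group[OF Z1])
  have RS: "Cen \<lhd> G Mod Z1 \<and> (\<exists>n. R = (derived (G Mod Z1) ^^ n) Cen \<and>
           (\<forall>m. (derived (G Mod Z1) ^^ n) Cen \<subseteq> (derived (G Mod Z1) ^^ m) Cen))"
    unfolding Cen_def R_def by (rule R_struct[OF fin Z1 H T])
  have nC: "Cen \<lhd> G Mod Z1" using RS by blast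
  obtain n where n: "R = (derived (G Mod Z1) ^^ n) Cen"
    "\<forall>m. (derived (G Mod Z1) ^^ n) Cen \<subseteq> (derived (G Mod Z1) ^^ m) Cen" using RS by blast
  have nD: "(derived (G Mod Z1) ^^ m) Cen \<lhd> G Mod Z1" for m
  proof (induction m)
    case 0 thus ?case using nC by simp
  next
    case (Suc m) thus ?case using Gb.derived_is_normal[OF Suc.IH] by simp
  qed
  have nR: "R \<lhd> G Mod Z1" unfolding n(1) by (rule nD)
  have sR: "subgroup R (G Mod Z1)" by (rule normal_imp_subgroup[OF nR])
  have RCen: "R \<subseteq> Cen" using spec[OF n(2), of 0] n(1) by simp
  have CenH: "Cen \<subseteq> (\<lambda>a. Z1 #> a) ` H" unfolding Cen_def cent_in_def by blast
  have u1: "\<Union>R \<lhd> G" by (rule Q_union_normal[OF Z1 nR])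
  have u2: "(\<lambda>a. Z1 #> a) ` (\<Union>R) = R" by (rule Q_factor[OF Z1 sR])
  have "Z1 \<in> R" using subgroup.one_closed[OF sR] by simp
  hence u3: "Z1 \<subseteq> \<Union>R" by blast
  have "\<Union>R \<subseteq> \<Union> ((\<lambda>a. Z1 #> a) ` H)" using RCen CenH by blast
  also have "\<Union> ((\<lambda>a. Z1 #> a) ` H) = H" by (rule Q1[OF Z1 nsub[OF H]]) (use Z1T TH in blast)
  finally have u4: "\<Union>R \<subseteq> H" .
  have u5: "card R \<le> 1" if CT: "\<Union>R \<subseteq> T"
  proof -
    have RT: "R \<subseteq> (\<lambda>a. Z1 #> a) ` T" using u2 CT by blast
    have ds: "derived_set (G Mod Z1) R \<subseteq> {\<one>\<^bsub>G Mod Z1\<^esub>}"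
    proof
      fix Xd assume "Xd \<in> derived_set (G Mod Z1) R"
      then obtain U V where UV: "U \<in> R" "V \<in> R"
        "Xd = U \<otimes>\<^bsub>G Mod Z1\<^esub> V \<otimes>\<^bsub>G Mod Z1\<^esub> inv\<^bsub>G Mod Z1\<^esub> U \<otimes>\<^bsub>G Mod Z1\<^esub> inv\<^bsub>G Mod Z1\<^esub> V" by blast
      have Uc: "U \<in> carrier (G Mod Z1)" and Vc: "V \<in> carrier (G Mod Z1)"
        using UV(1,2) subgroup.subset[OF sR] by auto
      have UC: "U \<in> Cen" and VT: "V \<in> (\<lambda>a. Z1 #> a) ` T" using UV RCen RT by auto
      have "\<forall>S \<in> (\<lambda>a. Z1 #> a) ` T. U \<otimes>\<^bsub>G Mod Z1\<^esub> S = S \<otimes>\<^bsub>G Mod Z1\<^esub> U"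
        using UC unfolding Cen_def cent_in_def by blast
      hence "U \<otimes>\<^bsub>G Mod Z1\<^esub> V = V \<otimes>\<^bsub>G Mod Z1\<^esub> U" using VT by blast
      hence "Xd = \<one>\<^bsub>G Mod Z1\<^esub>" unfolding UV(3) by (rule Gb.comm_commutator[OF Uc Vc])
      thus "Xd \<in> {\<one>\<^bsub>G Mod Z1\<^esub>}" by simp
    qed
    have "derived (G Mod Z1) R \<subseteq> {\<one>\<^bsub>G Mod Z1\<^esub>}"
      unfolding derived_def by (rule Gb.generate_subgroup_incl[OF ds Gb.triv_subgroup])
    moreover have "R \<subseteq> derived (G Mod Z1) R" using spec[OF n(2), of "Suc n"] n(1) by simp
    ultimately have "R \<subseteq> {\<one>\<^bsub>G Mod Z1\<^esub>}" by blast
    thus ?thesis using card_mono[of "{\<one>\<^bsub>G Mod Z1\<^esub>}" R] by simp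
  qed
  show ?thesis using u1 u2 u3 u4 u5 by blast
qed

end


context mgroup begin

lemma Q_int:
  assumes K: "K \<lhd> G" and X: "subgroup S G" and Y: "subgroup Y G" and KX: "K \<subseteq> S" and KY: "K \<subseteq> Y"
  shows "(\<lambda>a. K #> a) ` S \<inter> (\<lambda>a. K #> a) ` Y = (\<lambda>a. K #> a) ` (S \<inter> Y)"
proof
  show "(\<lambda>a. K #> a) ` S \<inter> (\<lambda>a. K #> a) ` Y \<subseteq> (\<lambda>a. K #> a) ` (S \<inter> Y)"
  proof
    fix U assume U: "U \<in> (\<lambda>a. K #> a) ` S \<inter> (\<lambda>a. K #> a) ` Y"
    then obtain x where x: "x \<in> S" "U = K #> x" by blast
    have xc: "x \<in> carrier G" by (rule subgroup.mem_carrier[OF X x(1)])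
    have "K #> x \<in> (\<lambda>a. K #> a) ` Y" using U x(2) by blast
    hence "x \<in> Y" using Q0[OF K Y KY xc] by simp
    thus "U \<in> (\<lambda>a. K #> a) ` (S \<inter> Y)" using x by blast
  qed
  show "(\<lambda>a. K #> a) ` (S \<inter> Y) \<subseteq> (\<lambda>a. K #> a) ` S \<inter> (\<lambda>a. K #> a) ` Y" by blast
qed

lemma iso_card: "G_isomorphic G A B A' B' \<Longrightarrow> card (carrier (sect G A B)) = card (carrier (sect G A' B'))"
  unfolding G_isomorphic_def iso_def using bij_betw_same_card by blast

lemma sect_card2:
  assumes fin: "finite (carrier G)" and ch: "chief_factor G H T"
  shows "2 \<le> card (carrier (sect G H T))"
proof -
  have H: "H \<lhd> G" and T: "T \<lhd> G" and TH: "T \<subseteq> H" and ne: "T \<noteq> H" using chief_sub[OF ch] by auto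
  obtain h where h: "h \<in> H" "h \<notin> T" using TH ne by blast
  have hc: "h \<in> carrier G" using h nsubset[OF H] by blast
  have "T #> h \<noteq> T" using pi_one_iff[OF T hc] h by simp
  moreover have "T #> \<one> = T" using nsubset[OF T] by simp
  moreover have "\<one> \<in> H" by (rule one_sub[OF nsub[OF H]])
  ultimately have "{T, T #> h} \<subseteq> carrier (sect G H T)" "card {T, T #> h} = 2"
    unfolding sect_carrier using h by force+
  moreover have "finite (carrier (sect G H T))" unfolding sect_carrier
    using finite_subset[OF nsubset[OF H] fin] by simp
  ultimately show ?thesis using card_mono by metis
qed

lemma lagrange_sub:
  assumes fin: "finite (carrier G)" and C: "subgroup C G" and S: "subgroup S G" and SC: "S \<subseteq> C"
  shows "card ((\<lambda>a. S #> a) ` C) * card S = card C"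
proof -
  have g: "group (G\<lparr>carrier := C\<rparr>)" by (rule subgroup_imp_group[OF C])
  have s: "subgroup S (G\<lparr>carrier := C\<rparr>)" by (rule subgroup_incl[OF S C SC])
  have "card (rcosets\<^bsub>G\<lparr>carrier := C\<rparr>\<^esub> S) * card S = order (G\<lparr>carrier := C\<rparr>)"
    by (rule group.lagrange[OF g s])
  moreover have "rcosets\<^bsub>G\<lparr>carrier := C\<rparr>\<^esub> S = (\<lambda>a. S #> a) ` C" unfolding RCOSETS_def by auto
  ultimately show ?thesis unfolding order_def by simp
qed


lemma main_aux:
  fixes f0 :: "'a monoid \<Rightarrow> 'a set \<Rightarrow> 'a set \<Rightarrow> bool"
    and f1 :: "'a set monoid \<Rightarrow> 'a set set \<Rightarrow> 'a set set \<Rightarrow> bool"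
    and K H T :: "'a set"
  assumes f: "chief_factor_function f0 f1"
    and fin: "finite (carrier G)"
    and K: "K \<lhd> G"
    and HT: "chief_factor G H T" "\<not> comm_group (sect G H T)"
    and KT: "K \<subseteq> T"
  defines "Z1 \<equiv> \<Union> (ZF (FactGroup G K) f1 \<inter> quot_img G T K)"
    and "Z2 \<equiv> \<Union> (ZF (FactGroup G K) f1 \<inter> quot_img G H K)"
  defines "Q \<equiv> sect G H Z1"
  defines "R \<equiv> sol_res (Q\<lparr>carrier := centralizer Q (quot_img G T Z1)\<rparr>)"
  defines "C \<equiv> \<Union> R"
  shows "(\<not> f0 G H T \<longrightarrow> Z2 = Z1) \<and>
         (f0 G H T \<longrightarrow> ((Z2 \<noteq> Z1 \<longleftrightarrow> card R = card (carrier (sect G H T))) \<and>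
                         (Z2 \<noteq> Z1 \<longrightarrow> Z2 = C)))"
proof -
  have ci0: "cff_iso_invariant f0" and ci1: "cff_iso_invariant f1" and qc: "cff_quot_compat f0 f1"
    using f unfolding chief_factor_function_def by auto
  have nH: "H \<lhd> G" and nT: "T \<lhd> G" and TH: "T \<subseteq> H" and TneH: "T \<noteq> H" using chief_sub[OF HT(1)] by auto
  have f0i: "f0 G A B = f0 G M N" if a: "chief_factor G A B" "chief_factor G M N" "G_isomorphic G A B M N" for A B M N
  proof -
    have "group G \<and> finite (carrier G) \<and> chief_factor G A B \<and> chief_factor G M N \<and> G_isomorphic G A B M N"
      using a is_group fin by simp
    thus ?thesis by (rule ci0[unfolded cff_iso_invariant_def, rule_format])
  qed
  have gb: "group (G Mod K)" by (rule normal.factorgroup_is_group[OF K])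
  interpret Kb: mgroup "G Mod K" unfolding mgroup_def by (rule gb)
  have finb: "finite (carrier (G Mod K))" unfolding carrier_FactGroup using fin by simp
  have f1i: "isoinv (G Mod K) f1" unfolding isoinv_def
  proof (intro allI impI)
    fix A B M N assume a: "chief_factor (G Mod K) A B \<and> chief_factor (G Mod K) M N \<and> G_isomorphic (G Mod K) A B M N"
    have "group (G Mod K) \<and> finite (carrier (G Mod K)) \<and> chief_factor (G Mod K) A B \<and> chief_factor (G Mod K) M N \<and> G_isomorphic (G Mod K) A B M N"
      using a gb finb by simp
    thus "f1 (G Mod K) A B = f1 (G Mod K) M N" by (rule ci1[unfolded cff_iso_invariant_def, rule_format])
  qed
  have qimg: "quot_img G S N = (\<lambda>a. N #> a) ` S" for S N unfolding quot_img_def by simp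
  have qc': "f1 (G Mod K) ((\<lambda>a. K #> a) ` A) ((\<lambda>a. K #> a) ` B) = f0 G A B"
    if a: "chief_factor G A B" "K \<subseteq> B" for A B
  proof -
    have "group G \<and> finite (carrier G) \<and> chief_factor G A B \<and> K \<lhd> G \<and> K \<subseteq> B" using a is_group fin K by simp
    hence "f1 (G Mod K) (quot_img G A K) (quot_img G B K) = f0 G A B"
      by (rule qc[unfolded cff_quot_compat_def, rule_format])
    thus ?thesis unfolding qimg .
  qed
  have zf: "PF (G Mod K) f1 (ZF (G Mod K) f1) \<and> (\<forall>N. PF (G Mod K) f1 N \<longrightarrow> N \<subseteq> ZF (G Mod K) f1)"
    by (rule Kb.ZF_props[OF finb f1i])
  define Zb where "Zb = ZF (G Mod K) f1"
  define Zp where "Zp = \<Union>Zb"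
  have PZb: "PF (G Mod K) f1 Zb" using zf unfolding Zb_def by blast
  have maxZb: "\<And>N. PF (G Mod K) f1 N \<Longrightarrow> N \<subseteq> Zb" using zf unfolding Zb_def by blast
  have nZb: "Zb \<lhd> G Mod K" using PZb unfolding PF_def by blast
  have nZp: "Zp \<lhd> G" unfolding Zp_def by (rule Q_union_normal[OF K nZb])
  have ZbZp: "(\<lambda>a. K #> a) ` Zp = Zb" unfolding Zp_def by (rule Q_factor[OF K normal_imp_subgroup[OF nZb]])
  have "K \<in> Zb" using subgroup.one_closed[OF normal_imp_subgroup[OF nZb]] by simp
  hence KZp: "K \<subseteq> Zp" unfolding Zp_def by blast
  have nZpT: "Zp \<inter> T \<lhd> G" by (rule normal_subgroup_intersect[OF nZp nT])
  have nZpH: "Zp \<inter> H \<lhd> G" by (rule normal_subgroup_intersect[OF nZp nH])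
  have Z1e: "Z1 = Zp \<inter> T"
  proof -
    have "Z1 = \<Union> ((\<lambda>a. K #> a) ` Zp \<inter> (\<lambda>a. K #> a) ` T)" unfolding Z1_def Zb_def[symmetric] qimg ZbZp ..
    also have "(\<lambda>a. K #> a) ` Zp \<inter> (\<lambda>a. K #> a) ` T = (\<lambda>a. K #> a) ` (Zp \<inter> T)"
      by (rule Q_int[OF K nsub[OF nZp] nsub[OF nT] KZp KT])
    also have "\<Union> ((\<lambda>a. K #> a) ` (Zp \<inter> T)) = Zp \<inter> T" by (rule Q1[OF K nsub[OF nZpT]]) (use KZp KT in blast)
    finally show ?thesis .
  qed
  have Z2e: "Z2 = Zp \<inter> H"
  proof -
    have "Z2 = \<Union> ((\<lambda>a. K #> a) ` Zp \<inter> (\<lambda>a. K #> a) ` H)" unfolding Z2_def Zb_def[symmetric] qimg ZbZp ..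
    also have "(\<lambda>a. K #> a) ` Zp \<inter> (\<lambda>a. K #> a) ` H = (\<lambda>a. K #> a) ` (Zp \<inter> H)"
      by (rule Q_int[OF K nsub[OF nZp] nsub[OF nH] KZp]) (use KT TH in blast)
    also have "\<Union> ((\<lambda>a. K #> a) ` (Zp \<inter> H)) = Zp \<inter> H" by (rule Q1[OF K nsub[OF nZpH]]) (use KZp KT TH in blast)
    finally show ?thesis .
  qed
  have nZ1: "Z1 \<lhd> G" unfolding Z1e by (rule nZpT)
  have nZ2: "Z2 \<lhd> G" unfolding Z2e by (rule nZpH)
  have Z1T: "Z1 \<subseteq> T" unfolding Z1e by blast
  have KZ1: "K \<subseteq> Z1" unfolding Z1e using KZp KT by blast
  have Z2T: "Z2 \<inter> T = Z1" unfolding Z1e Z2e using TH by blast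
  have PG: "f0 G A B" if a: "chief_factor G A B" "K \<subseteq> B" "A \<subseteq> Zp" for A B
  proof -
    have c: "chief_factor (G Mod K) ((\<lambda>a. K #> a) ` A) ((\<lambda>a. K #> a) ` B)" by (rule Q_chief[OF K a(1,2)])
    have "(\<lambda>a. K #> a) ` A \<subseteq> Zb" using image_mono[OF a(3), of "\<lambda>a. K #> a"] ZbZp by simp
    hence "f1 (G Mod K) ((\<lambda>a. K #> a) ` A) ((\<lambda>a. K #> a) ` B)" using PZb c unfolding PF_def by blast
    thus ?thesis using qc'[OF a(1,2)] by simp
  qed
  have MaxG: "Cx \<subseteq> Zp" if a: "Cx \<lhd> G" "chief_factor G Cx Z1" "f0 G Cx Z1" for Cx
  proof -
    have nZ1b: "(\<lambda>a. K #> a) ` Z1 \<lhd> G Mod K" by (rule Q_normal[OF K nZ1])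
    have "(\<lambda>a. K #> a) ` Z1 \<subseteq> Zb" using image_mono[OF Z1T, of "\<lambda>a. K #> a"] ZbZp Z1e by auto
    hence P1: "PF (G Mod K) f1 ((\<lambda>a. K #> a) ` Z1)" by (rule Kb.PF_mono[OF PZb nZ1b])
    have c: "chief_factor (G Mod K) ((\<lambda>a. K #> a) ` Cx) ((\<lambda>a. K #> a) ` Z1)" by (rule Q_chief[OF K a(2) KZ1])
    have fv: "f1 (G Mod K) ((\<lambda>a. K #> a) ` Cx) ((\<lambda>a. K #> a) ` Z1)" using qc'[OF a(2) KZ1] a(3) by simp
    have "PF (G Mod K) f1 ((\<lambda>a. K #> a) ` Cx)" by (rule Kb.PF_ext[OF f1i P1 Q_normal[OF K a(1)] c fv])
    hence "(\<lambda>a. K #> a) ` Cx \<subseteq> (\<lambda>a. K #> a) ` Zp" using maxZb ZbZp by simp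
    hence "\<Union> ((\<lambda>a. K #> a) ` Cx) \<subseteq> \<Union> ((\<lambda>a. K #> a) ` Zp)" by (rule Union_mono)
    moreover have "\<Union> ((\<lambda>a. K #> a) ` Cx) = Cx"
      by (rule Q1[OF K nsub[OF a(1)]]) (use KZ1 chief_sub[OF a(2)] in blast)
    moreover have "\<Union> ((\<lambda>a. K #> a) ` Zp) = Zp" by (rule Q1[OF K nsub[OF nZp] KZp])
    ultimately show ?thesis by simp
  qed
  have Reqn: "R = sol_res ((G Mod Z1)\<lparr>carrier := cent_in (G Mod Z1) ((\<lambda>a. Z1 #> a) ` H) ((\<lambda>a. Z1 #> a) ` T)\<rparr>)"
    unfolding R_def Q_def Y_eq Cen_eq qimg ..
  have A1: "chief_factor G Z2 Z1 \<and> G_isomorphic G Z2 Z1 H T \<and> H = Z2 <#> T" if ne: "Z2 \<noteq> Z1"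
  proof -
    have "\<not> H \<inter> Zp \<subseteq> T"
    proof
      assume "H \<inter> Zp \<subseteq> T"
      hence "Z2 \<subseteq> T" unfolding Z2e by blast
      hence "Z2 = Z1" using Z2T by blast
      thus False using ne by simp
    qed
    hence e: "(H \<inter> Zp) <#> T = H" using chief_split[OF HT(1) nZp] by blast
    have "chief_factor G (H \<inter> Zp) (T \<inter> Zp) \<and> G_isomorphic G (H \<inter> Zp) (T \<inter> Zp) H T"
      by (rule chief_restrict[OF HT(1) nZp e])
    moreover have "H \<inter> Zp = Z2" "T \<inter> Zp = Z1" unfolding Z1e Z2e by blast+
    ultimately show ?thesis using e by simp
  qed
  have conj1: "\<not> f0 G H T \<longrightarrow> Z2 = Z1"
  proof (intro impI, rule ccontr)
    assume nf: "\<not> f0 G H T" and ne: "Z2 \<noteq> Z1"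
    have a: "chief_factor G Z2 Z1" "G_isomorphic G Z2 Z1 H T" using A1[OF ne] by auto
    have "f0 G Z2 Z1" by (rule PG[OF a(1) KZ1]) (unfold Z2e, blast)
    moreover have "f0 G Z2 Z1 = f0 G H T" by (rule f0i[OF a(1) HT(1) a(2)])
    ultimately show False using nf by simp
  qed
  have P1: "R = (\<lambda>a. Z1 #> a) ` Z2 \<and> C = Z2 \<and> card R = card (carrier (sect G H T))" if ne: "Z2 \<noteq> Z1"
  proof -
    have a: "chief_factor G Z2 Z1" "G_isomorphic G Z2 Z1 H T" "H = Z2 <#> T" using A1[OF ne] by auto
    have RZ: "R = (\<lambda>a. Z1 #> a) ` Z2" unfolding Reqn by (rule CA[OF fin nZ1 nZ2 nH nT a(1) a(3) Z2T HT(2)])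
    have "C = Z2" unfolding C_def RZ by (rule Q1[OF nZ1 nsub[OF nZ2]]) (use chief_sub[OF a(1)] in blast)
    moreover have "card R = card (carrier (sect G H T))"
      using iso_card[OF a(2)] unfolding sect_carrier RZ .
    ultimately show ?thesis using RZ by simp
  qed
  have P2: "Z2 \<noteq> Z1" if fv: "f0 G H T" and ceq: "card R = card (carrier (sect G H T))"
  proof
    assume eq: "Z2 = Z1"
    have cb: "\<Union>R \<lhd> G \<and> Z1 \<subseteq> \<Union>R \<and> \<Union>R \<subseteq> H \<and> (\<lambda>a. Z1 #> a) ` (\<Union>R) = R \<and> (\<Union>R \<subseteq> T \<longrightarrow> card R \<le> 1)"
      unfolding Reqn by (rule CB[OF fin nZ1 nH nT Z1T TH])
    have nC: "C \<lhd> G" and Z1C: "Z1 \<subseteq> C" and CH: "C \<subseteq> H" and pC: "(\<lambda>a. Z1 #> a) ` C = R"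
      and CT1: "C \<subseteq> T \<Longrightarrow> card R \<le> 1" using cb unfolding C_def by auto
    have "2 \<le> card R" using sect_card2[OF fin HT(1)] ceq by simp
    hence nCT: "\<not> C \<subseteq> T" using CT1 by auto
    have nCT': "C <#> T \<lhd> G" by (rule normal_subgroup_set_mult_closed[OF nC nT])
    have s1: "T \<subseteq> C <#> T" by (rule sm_sup_r[OF nsub[OF nC] nsubset[OF nT]])
    have s2: "C <#> T \<subseteq> H" by (rule sm_subset_sub[OF nsub[OF nH] CH TH])
    have "C <#> T = T \<or> C <#> T = H" by (rule chief_max[OF HT(1) nCT' s1 s2])
    moreover have "C \<subseteq> C <#> T" by (rule sm_sup_l[OF nsub[OF nT] nsubset[OF nC]])
    ultimately have HCT: "H = C <#> T" using nCT by auto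
    have nCiT: "C \<inter> T \<lhd> G" by (rule normal_subgroup_intersect[OF nC nT])
    have ps: "(chief_factor G C (C \<inter> T) \<longleftrightarrow> chief_factor G H T) \<and> G_isomorphic G C (C \<inter> T) H T"
      by (rule perspective[OF nC nCiT nT _ _ HCT]) auto
    have c1: "card ((\<lambda>a. (C \<inter> T) #> a) ` C) = card ((\<lambda>a. Z1 #> a) ` C)"
      using iso_card[OF conjunct2[OF ps]] ceq pC unfolding sect_carrier by simp
    have l1: "card ((\<lambda>a. Z1 #> a) ` C) * card Z1 = card C"
      by (rule lagrange_sub[OF fin nsub[OF nC] nsub[OF nZ1] Z1C])
    have l2: "card ((\<lambda>a. (C \<inter> T) #> a) ` C) * card (C \<inter> T) = card C"
      by (rule lagrange_sub[OF fin nsub[OF nC] nsub[OF nCiT]]) blast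
    have finC: "finite C" using finite_subset[OF nsubset[OF nC] fin] .
    have "\<one> \<in> C" by (rule one_sub[OF nsub[OF nC]])
    hence "card ((\<lambda>a. Z1 #> a) ` C) > 0" using finC by (auto simp: card_gt_0_iff)
    hence "card Z1 = card (C \<inter> T)" using l1 l2 c1 by (metis mult_left_cancel not_gr0)
    moreover have "Z1 \<subseteq> C \<inter> T" using Z1C Z1T by blast
    moreover have "finite (C \<inter> T)" using finC by blast
    ultimately have Z1CT: "Z1 = C \<inter> T" using card_subset_eq by metis
    have chC: "chief_factor G C Z1" using ps HT(1) Z1CT by simp
    have isoC: "G_isomorphic G C Z1 H T" using ps Z1CT by simp
    have "f0 G C Z1" using f0i[OF chC HT(1) isoC] fv by simp
    hence "C \<subseteq> Zp" by (rule MaxG[OF nC chC])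
    hence "C \<subseteq> Z2" unfolding Z2e using CH by blast
    thus False using eq Z1T nCT by blast
  qed
  show ?thesis using conj1 P1 P2 by blast
qed

end

theorem mainTheorem4:
  fixes G :: "'a monoid"
    and f0 :: "'a monoid \<Rightarrow> 'a set \<Rightarrow> 'a set \<Rightarrow> bool"
    and f1 :: "'a set monoid \<Rightarrow> 'a set set \<Rightarrow> 'a set set \<Rightarrow> bool"
    and K H T :: "'a set"
  assumes f: "chief_factor_function f0 f1"
    and G: "group G" "finite (carrier G)"
    and K: "K \<lhd> G"
    and HT: "chief_factor G H T" "\<not> comm_group (sect G H T)"
    and KT: "K \<subseteq> T"
  defines "Z1 \<equiv> \<Union> (ZF (FactGroup G K) f1 \<inter> quot_img G T K)"
    and "Z2 \<equiv> \<Union> (ZF (FactGroup G K) f1 \<inter> quot_img G H K)"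
  defines "Q \<equiv> sect G H Z1"
  defines "R \<equiv> sol_res (Q\<lparr>carrier := centralizer Q (quot_img G T Z1)\<rparr>)"
  defines "C \<equiv> \<Union> R"
  shows "(\<not> f0 G H T \<longrightarrow> Z2 = Z1) \<and>
         (f0 G H T \<longrightarrow> ((Z2 \<noteq> Z1 \<longleftrightarrow> card R = card (carrier (sect G H T))) \<and>
                         (Z2 \<noteq> Z1 \<longrightarrow> Z2 = C)))"
proof -
  interpret g: mgroup G unfolding mgroup_def by (rule G(1))
  show ?thesis unfolding Z1_def Z2_def Q_def R_def C_def
    by (rule g.main_aux[OF f G(2) K HT KT])
qed

end
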